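(* Let $R$ be a ring, $*\in\{l,r,\emptyset\}$, $\mathfrak{a}\in\mathrm{ass}\,\mathbb{L}_*(R)$, and $\pi:R\to\overline{R}:=R/\mathfrak{a}$, $r\mapsto\overline{r}=r+\mathfrak{a}$. Then \begin{enumerate} \item $T_{*,\mathfrak{a}}(R)=\pi^{-1}(S_*(\overline{R}))$; \item $\mathbb{Q}_{*,\mathfrak{a}}(R)\simeq Q_*(\overline{R})$, an $R$-isomorphism; \item $T_{*,\mathfrak{a}}(R)=\sigma^{-1}(\mathbb{Q}_{*,\mathfrak{a}}(R)^\times)=\sigma^{-1}(Q_*(\overline{R})^\times)$, where $\sigma:R\to\mathbb{Q}_{*,\mathfrak{a}}(R)\simeq Q_*(\overline{R})$, $r\mapsto\frac r1$. \end{enumerate}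
   Context: Rings are associative with $1$. Multiplicative set: $SS\subseteq S$, $1\in S$, $0\notin S$. $R\langle S^{-1}\rangle=R\langle X_S\rangle/I_S$ ($R\langle X_S\rangle$ freely generated by $R$ and noncommuting $x_s$, $s\in S$; $I_S$ generated by $sx_s-1,x_ss-1$); $\mathrm{ass}_R(S)=\ker(R\to R\langle S^{-1}\rangle)$. $S$ is left (resp. right) localizable if $R\langle S^{-1}\rangle\ne0$ and every element has the form $(x_s+I_S)(r+I_S)$ (resp. $(r+I_S)(x_s+I_S)$); localizable if both; $\mathbb{L}_*(R)$ is the set of $*$-localizable sets ($l$: left, $r$: right, $\emptyset$: both), $\mathbb{L}_*(R,\mathfrak{a})=\{S\in\mathbb{L}_*(R):\mathrm{ass}_R(S)=\mathfrak{a}\}$ and $\mathrm{ass}\,\mathbb{L}_*(R)=\{\mathrm{ass}_R(S):S\in\mathbb{L}_*(R)\}$. $T_{*,\mathfrak{a}}(R):=\bigcup_{S\in\mathbb{L}_*(R,\mathfrak{a})}S$; it is the largest element of $\mathbb{L}_*(R,\mathfrak{a})$, and $\mathbb{Q}_{*,\mathfrak{a}}(R):=R\langle T_{*,\mathfrak{a}}(R)^{-1}\rangle$. For a ring $A$, a regular left (right) Ore set is a multiplicative set $T$ of regular elements with $Ta\cap At\ne\emptyset$ (resp. $aT\cap tA\neq\emptyset$) for all $a\in A,t\in T$; there is a largest regular left Ore set $S_l(A)$, a largest regular right Ore set $S_r(A)$ and a largest regular (two-sided) Ore set $S_\emptyset(A)=S(A)$; $Q_l(A)=S_l(A)^{-1}A$,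 $Q_r(A)=AS_r(A)^{-1}$, $Q_\emptyset(A)=S(A)^{-1}A$. $Q^\times$ is the unit group. *)

theory Defs
  imports "HOL-Algebra.QuotRing"
begin

definition mult_set :: "('a, 'm) ring_scheme \<Rightarrow> 'a set \<Rightarrow> bool" where
  "mult_set R S \<longleftrightarrow> S \<subseteq> carrier R \<and> \<one>\<^bsub>R\<^esub> \<in> S \<and> \<zero>\<^bsub>R\<^esub> \<notin> S \<and>
     (\<forall>a\<in>S. \<forall>b\<in>S. a \<otimes>\<^bsub>R\<^esub> b \<in> S)"

text \<open>The free ring on the alphabet (elements of R) + (variables x_s, s in S):
  finitely supported integer-valued functions on words, with convolution product
  along concatenation.  Inl r is the letter r, Inr s is the variable x_s.\<close>

definition fr_carrier :: "'a set \<Rightarrow> 'a set \<Rightarrow> (('a + 'a) list \<Rightarrow> int) set" where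
  "fr_carrier A S = {f. finite {w. f w \<noteq> 0} \<and>
      (\<forall>w. f w \<noteq> 0 \<longrightarrow> set w \<subseteq> Inl ` A \<union> Inr ` S)}"

definition free_ring :: "'a set \<Rightarrow> 'a set \<Rightarrow> (('a + 'a) list \<Rightarrow> int) ring" where
  "free_ring A S = \<lparr> carrier = fr_carrier A S,
      mult = (\<lambda>f g w. \<Sum>i\<le>length w. f (take i w) * g (drop i w)),
      one = (\<lambda>w. if w = [] then 1 else 0),
      zero = (\<lambda>w. 0),
      add = (\<lambda>f g w. f w + g w) \<rparr>"

definition mon :: "('a + 'a) list \<Rightarrow> (('a + 'a) list \<Rightarrow> int)" where
  "mon u = (\<lambda>w. if w = u then 1 else 0)"

text \<open>Relations: the letters of R multiply and add as in R (so that R embeds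
  as a subring-image and R<X_S> is the ring freely generated by R and the x_s),
  and s x_s = 1 = x_s s for s in S.\<close>

definition loc_rels :: "('a, 'm) ring_scheme \<Rightarrow> 'a set \<Rightarrow> (('a + 'a) list \<Rightarrow> int) set" where
  "loc_rels R S =
     {(\<lambda>w. mon [Inl (a \<oplus>\<^bsub>R\<^esub> b)] w - mon [Inl a] w - mon [Inl b] w) | a b.
         a \<in> carrier R \<and> b \<in> carrier R}
   \<union> {(\<lambda>w. mon [Inl (a \<otimes>\<^bsub>R\<^esub> b)] w - mon [Inl a, Inl b] w) | a b.
         a \<in> carrier R \<and> b \<in> carrier R}
   \<union> {(\<lambda>w. mon [Inl \<one>\<^bsub>R\<^esub>] w - mon [] w)}
   \<union> {(\<lambda>w. mon [Inl s, Inr s] w - mon [] w) | s. s \<in> S}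
   \<union> {(\<lambda>w. mon [Inr s, Inl s] w - mon [] w) | s. s \<in> S}"

definition loc_ideal :: "('a, 'm) ring_scheme \<Rightarrow> 'a set \<Rightarrow> (('a + 'a) list \<Rightarrow> int) set" where
  "loc_ideal R S = genideal (free_ring (carrier R) S) (loc_rels R S)"

definition loc :: "('a, 'm) ring_scheme \<Rightarrow> 'a set \<Rightarrow> (('a + 'a) list \<Rightarrow> int) set ring" where
  "loc R S = free_ring (carrier R) S Quot loc_ideal R S"

definition loc_map :: "('a, 'm) ring_scheme \<Rightarrow> 'a set \<Rightarrow> 'a \<Rightarrow> (('a + 'a) list \<Rightarrow> int) set" where
  "loc_map R S r = loc_ideal R S +>\<^bsub>free_ring (carrier R) S\<^esub> mon [Inl r]"

definition loc_var :: "('a, 'm) ring_scheme \<Rightarrow> 'a set \<Rightarrow> 'a \<Rightarrow> (('a + 'a) list \<Rightarrow> int) set" where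
  "loc_var R S s = loc_ideal R S +>\<^bsub>free_ring (carrier R) S\<^esub> mon [Inr s]"

definition ass :: "('a, 'm) ring_scheme \<Rightarrow> 'a set \<Rightarrow> 'a set" where
  "ass R S = {r \<in> carrier R. loc_map R S r = \<zero>\<^bsub>loc R S\<^esub>}"

datatype side = Lft | Rgt | Two

definition left_localizable :: "('a, 'm) ring_scheme \<Rightarrow> 'a set \<Rightarrow> bool" where
  "left_localizable R S \<longleftrightarrow> mult_set R S \<and> \<one>\<^bsub>loc R S\<^esub> \<noteq> \<zero>\<^bsub>loc R S\<^esub> \<and>
     (\<forall>q\<in>carrier (loc R S). \<exists>s\<in>S. \<exists>r\<in>carrier R.
        q = loc_var R S s \<otimes>\<^bsub>loc R S\<^esub> loc_map R S r)"

definition right_localizable :: "('a, 'm) ring_scheme \<Rightarrow> 'a set \<Rightarrow> bool" where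
  "right_localizable R S \<longleftrightarrow> mult_set R S \<and> \<one>\<^bsub>loc R S\<^esub> \<noteq> \<zero>\<^bsub>loc R S\<^esub> \<and>
     (\<forall>q\<in>carrier (loc R S). \<exists>s\<in>S. \<exists>r\<in>carrier R.
        q = loc_map R S r \<otimes>\<^bsub>loc R S\<^esub> loc_var R S s)"

fun localizable :: "side \<Rightarrow> ('a, 'm) ring_scheme \<Rightarrow> 'a set \<Rightarrow> bool" where
  "localizable Lft R S = left_localizable R S"
| "localizable Rgt R S = right_localizable R S"
| "localizable Two R S = (left_localizable R S \<and> right_localizable R S)"

definition ass_L :: "side \<Rightarrow> ('a, 'm) ring_scheme \<Rightarrow> 'a set set" where
  "ass_L t R = {ass R S | S. localizable t R S}"

definition L_ass :: "side \<Rightarrow> ('a, 'm) ring_scheme \<Rightarrow> 'a set \<Rightarrow> 'a set set" where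
  "L_ass t R \<aa> = {S. localizable t R S \<and> ass R S = \<aa>}"

definition T_ass :: "side \<Rightarrow> ('a, 'm) ring_scheme \<Rightarrow> 'a set \<Rightarrow> 'a set" where
  "T_ass t R \<aa> = \<Union> (L_ass t R \<aa>)"

definition Q_ass :: "side \<Rightarrow> ('a, 'm) ring_scheme \<Rightarrow> 'a set \<Rightarrow> (('a + 'a) list \<Rightarrow> int) set ring" where
  "Q_ass t R \<aa> = loc R (T_ass t R \<aa>)"

definition regular :: "('a, 'm) ring_scheme \<Rightarrow> 'a \<Rightarrow> bool" where
  "regular A t \<longleftrightarrow> t \<in> carrier A \<and>
     (\<forall>a\<in>carrier A. t \<otimes>\<^bsub>A\<^esub> a = \<zero>\<^bsub>A\<^esub> \<longrightarrow> a = \<zero>\<^bsub>A\<^esub>) \<and>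
     (\<forall>a\<in>carrier A. a \<otimes>\<^bsub>A\<^esub> t = \<zero>\<^bsub>A\<^esub> \<longrightarrow> a = \<zero>\<^bsub>A\<^esub>)"

definition reg_left_Ore :: "('a, 'm) ring_scheme \<Rightarrow> 'a set \<Rightarrow> bool" where
  "reg_left_Ore A T \<longleftrightarrow> mult_set A T \<and> (\<forall>t\<in>T. regular A t) \<and>
     (\<forall>a\<in>carrier A. \<forall>t\<in>T. \<exists>t'\<in>T. \<exists>a'\<in>carrier A. t' \<otimes>\<^bsub>A\<^esub> a = a' \<otimes>\<^bsub>A\<^esub> t)"

definition reg_right_Ore :: "('a, 'm) ring_scheme \<Rightarrow> 'a set \<Rightarrow> bool" where
  "reg_right_Ore A T \<longleftrightarrow> mult_set A T \<and> (\<forall>t\<in>T. regular A t) \<and>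
     (\<forall>a\<in>carrier A. \<forall>t\<in>T. \<exists>t'\<in>T. \<exists>a'\<in>carrier A. a \<otimes>\<^bsub>A\<^esub> t' = t \<otimes>\<^bsub>A\<^esub> a')"

fun reg_Ore :: "side \<Rightarrow> ('a, 'm) ring_scheme \<Rightarrow> 'a set \<Rightarrow> bool" where
  "reg_Ore Lft A T = reg_left_Ore A T"
| "reg_Ore Rgt A T = reg_right_Ore A T"
| "reg_Ore Two A T = (reg_left_Ore A T \<and> reg_right_Ore A T)"

definition S_Ore :: "side \<Rightarrow> ('a, 'm) ring_scheme \<Rightarrow> 'a set" where
  "S_Ore t A = \<Union> {T. reg_Ore t A T}"

text \<open>This determines Q up to
  unique A-isomorphism.  For the two-sided case Q_\<emptyset>(A) = S(A)^{-1}A.\<close>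

definition is_left_fractions ::
  "('a, 'm) ring_scheme \<Rightarrow> 'a set \<Rightarrow> ('q, 'n) ring_scheme \<Rightarrow> ('a \<Rightarrow> 'q) \<Rightarrow> bool" where
  "is_left_fractions A T Q \<iota> \<longleftrightarrow> ring Q \<and> \<iota> \<in> ring_hom A Q \<and>
     (\<forall>t\<in>T. \<iota> t \<in> Units Q) \<and>
     (\<forall>q\<in>carrier Q. \<exists>t\<in>T. \<exists>a\<in>carrier A. q = inv\<^bsub>Q\<^esub> (\<iota> t) \<otimes>\<^bsub>Q\<^esub> \<iota> a) \<and>
     (\<forall>a\<in>carrier A. \<iota> a = \<zero>\<^bsub>Q\<^esub> \<longleftrightarrow> (\<exists>t\<in>T. t \<otimes>\<^bsub>A\<^esub> a = \<zero>\<^bsub>A\<^esub>))"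

definition is_right_fractions ::
  "('a, 'm) ring_scheme \<Rightarrow> 'a set \<Rightarrow> ('q, 'n) ring_scheme \<Rightarrow> ('a \<Rightarrow> 'q) \<Rightarrow> bool" where
  "is_right_fractions A T Q \<iota> \<longleftrightarrow> ring Q \<and> \<iota> \<in> ring_hom A Q \<and>
     (\<forall>t\<in>T. \<iota> t \<in> Units Q) \<and>
     (\<forall>q\<in>carrier Q. \<exists>t\<in>T. \<exists>a\<in>carrier A. q = \<iota> a \<otimes>\<^bsub>Q\<^esub> inv\<^bsub>Q\<^esub> (\<iota> t)) \<and>
     (\<forall>a\<in>carrier A. \<iota> a = \<zero>\<^bsub>Q\<^esub> \<longleftrightarrow> (\<exists>t\<in>T. a \<otimes>\<^bsub>A\<^esub> t = \<zero>\<^bsub>A\<^esub>))"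

fun is_Q :: "side \<Rightarrow> ('a, 'm) ring_scheme \<Rightarrow> ('q, 'n) ring_scheme \<Rightarrow> ('a \<Rightarrow> 'q) \<Rightarrow> bool" where
  "is_Q Lft A Q \<iota> = is_left_fractions A (S_Ore Lft A) Q \<iota>"
| "is_Q Rgt A Q \<iota> = is_right_fractions A (S_Ore Rgt A) Q \<iota>"
| "is_Q Two A Q \<iota> = is_left_fractions A (S_Ore Two A) Q \<iota>"

end

theory Submission
  imports Defs
begin

definition conv :: "('b list \<Rightarrow> int) \<Rightarrow> ('b list \<Rightarrow> int) \<Rightarrow> 'b list \<Rightarrow> int" where
  "conv f g = (\<lambda>w. \<Sum>i\<le>length w. f (take i w) * g (drop i w))"

definition supp :: "('b \<Rightarrow> int) \<Rightarrow> 'b set" where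
  "supp f = {w. f w \<noteq> 0}"

lemma free_ring_simps:
  "carrier (free_ring A S) = fr_carrier A S"
  "mult (free_ring A S) = conv"
  "one (free_ring A S) = mon []"
  "zero (free_ring A S) = (\<lambda>w. 0)"
  "add (free_ring A S) = (\<lambda>f g w. f w + g w)"
  by (auto simp: free_ring_def conv_def mon_def fun_eq_iff)

lemma conv_mon: "conv (mon u) (mon v) = mon (u @ v)"
proof (rule ext)
  fix w
  have "conv (mon u) (mon v) w = (\<Sum>i\<le>length w. if i = length u \<and> w = u @ v then 1 else 0)"
    unfolding conv_def mon_def
  proof (rule sum.cong)
    fix i assume i: "i \<in> {..length w}"
    have "(take i w = u \<and> drop i w = v) \<longleftrightarrow> (i = length u \<and> w = u @ v)"
    proof
      assume "take i w = u \<and> drop i w = v"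
      then show "i = length u \<and> w = u @ v" using i
        by (metis append_take_drop_id atMost_iff length_take min.absorb2)
    next
      assume "i = length u \<and> w = u @ v" then show "take i w = u \<and> drop i w = v" by simp
    qed
    then show "(if take i w = u then 1 else 0) * (if drop i w = v then 1 else 0) =
       (if i = length u \<and> w = u @ v then 1 else (0::int))" by auto
  qed simp
  also have "\<dots> = mon (u @ v) w"
    by (cases "w = u @ v") (auto simp: mon_def)
  finally show "conv (mon u) (mon v) w = mon (u @ v) w" .
qed

lemma conv_sum_left: "conv (\<lambda>w. \<Sum>a\<in>F. G a w) g = (\<lambda>w. \<Sum>a\<in>F. conv (G a) g w)"
  unfolding conv_def by (auto simp: sum_distrib_right intro!: ext sum.swap)

lemma conv_sum_right: "conv g (\<lambda>w. \<Sum>a\<in>F. G a w) = (\<lambda>w. \<Sum>a\<in>F. conv g (G a) w)"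
  unfolding conv_def by (auto simp: sum_distrib_left intro!: ext sum.swap)

lemma conv_scale_left: "conv (\<lambda>w. c * f w) g = (\<lambda>w. c * conv f g w)"
  by (simp add: conv_def sum_distrib_left mult.assoc)

lemma conv_scale_right: "conv f (\<lambda>w. c * g w) = (\<lambda>w. c * conv f g w)"
  by (simp add: conv_def sum_distrib_left mult.left_commute)

lemma conv_add_left: "conv (\<lambda>w. f w + g w) h = (\<lambda>w. conv f h w + conv g h w)"
  by (simp add: conv_def sum.distrib distrib_right)

lemma conv_add_right: "conv h (\<lambda>w. f w + g w) = (\<lambda>w. conv h f w + conv h g w)"
  by (simp add: conv_def sum.distrib distrib_left)

lemma decomp: "finite (supp f) \<Longrightarrow> (\<lambda>w. \<Sum>u\<in>supp f. f u * mon u w) = f"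
proof (rule ext)
  fix w
  assume "finite (supp f)"
  have "(\<Sum>u\<in>supp f. f u * mon u w) = (\<Sum>u\<in>supp f. if u = w then f u else 0)"
    by (rule sum.cong) (auto simp: mon_def)
  also have "\<dots> = f w" using \<open>finite (supp f)\<close> by (simp add: sum.delta' supp_def)
  finally show "(\<Sum>u\<in>supp f. f u * mon u w) = f w" .
qed

lemma conv_assoc_sums:
  "conv (conv (\<lambda>w. \<Sum>u\<in>U. a u * mon u w) (\<lambda>w. \<Sum>v\<in>V. b v * mon v w)) (\<lambda>w. \<Sum>x\<in>W. c x * mon x w)
   = conv (\<lambda>w. \<Sum>u\<in>U. a u * mon u w) (conv (\<lambda>w. \<Sum>v\<in>V. b v * mon v w) (\<lambda>w. \<Sum>x\<in>W. c x * mon x w))"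
  by (simp add: conv_sum_left conv_sum_right conv_scale_left conv_scale_right conv_mon
       sum_distrib_left sum_distrib_right mult.assoc)

lemma conv_assoc:
  fixes f g h :: "('a + 'a) list \<Rightarrow> int"
  assumes "finite (supp f)" "finite (supp g)" "finite (supp h)"
  shows "conv (conv f g) h = conv f (conv g h)"
  using conv_assoc_sums[of f "supp f" g "supp g" h "supp h"]
  by (simp only: decomp[OF assms(1)] decomp[OF assms(2)] decomp[OF assms(3)])

lemma conv_one_left: "conv (mon []) f = f"
proof (rule ext)
  fix w
  have "conv (mon []) f w = (\<Sum>i\<le>length w. if i = 0 then f w else 0)"
    unfolding conv_def mon_def by (rule sum.cong) auto
  then show "conv (mon []) f w = f w" by simp
qed

lemma conv_one_right: "conv f (mon []) = f"
proof (rule ext)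
  fix w
  have "conv f (mon []) w = (\<Sum>i\<le>length w. if i = length w then f w else 0)"
    unfolding conv_def mon_def by (rule sum.cong) auto
  then show "conv f (mon []) w = f w" by simp
qed

lemma supp_conv: "supp (conv f g) \<subseteq> (\<lambda>(u, v). u @ v) ` (supp f \<times> supp g)"
proof
  fix w assume "w \<in> supp (conv f g)"
  then have "(\<Sum>i\<le>length w. f (take i w) * g (drop i w)) \<noteq> 0" by (simp add: supp_def conv_def)
  then obtain i where "f (take i w) * g (drop i w) \<noteq> 0"
    by (meson sum.not_neutral_contains_not_neutral)
  then have "(take i w, drop i w) \<in> supp f \<times> supp g" by (simp add: supp_def)
  then show "w \<in> (\<lambda>(u, v). u @ v) ` (supp f \<times> supp g)"
    by (metis (no_types, lifting) append_take_drop_id case_prod_conv image_eqI)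
qed

lemma fr_carrier_iff: "f \<in> fr_carrier A S \<longleftrightarrow> finite (supp f) \<and> (\<forall>w\<in>supp f. set w \<subseteq> Inl ` A \<union> Inr ` S)"
  by (auto simp: fr_carrier_def supp_def)

lemma conv_closed:
  assumes "f \<in> fr_carrier A S" "g \<in> fr_carrier A S"
  shows "conv f g \<in> fr_carrier A S"
  unfolding fr_carrier_iff
proof
  show "finite (supp (conv f g))"
  proof (rule finite_subset[OF supp_conv finite_imageI])
    show "finite (supp f \<times> supp g)" using assms by (simp add: fr_carrier_iff)
  qed
  show "\<forall>w\<in>supp (conv f g). set w \<subseteq> Inl ` A \<union> Inr ` S"
  proof
    fix w assume "w \<in> supp (conv f g)"
    then obtain u v where "u \<in> supp f" "v \<in> supp g" "w = u @ v" using supp_conv[of f g] by auto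
    then show "set w \<subseteq> Inl ` A \<union> Inr ` S" using assms by (auto simp: fr_carrier_iff)
  qed
qed

lemma supp_mon: "supp (mon u) = {u}" by (auto simp: supp_def mon_def)

lemma mon_closed: "set u \<subseteq> Inl ` A \<union> Inr ` S \<Longrightarrow> mon u \<in> fr_carrier A S"
  by (simp add: fr_carrier_iff supp_mon)

lemma add_closed_fr:
  assumes "f \<in> fr_carrier A S" "g \<in> fr_carrier A S"
  shows "(\<lambda>w. f w + g w) \<in> fr_carrier A S"
proof -
  have "supp (\<lambda>w. f w + g w) \<subseteq> supp f \<union> supp g" by (auto simp: supp_def)
  then show ?thesis using assms unfolding fr_carrier_iff by (meson Un_iff finite_Un rev_finite_subset subsetD)
qed

lemma neg_closed_fr:
  assumes "f \<in> fr_carrier A S"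
  shows "(\<lambda>w. - f w) \<in> fr_carrier A S"
  using assms by (simp add: fr_carrier_iff supp_def)

lemma zero_closed_fr: "(\<lambda>w. 0) \<in> fr_carrier A S"
  by (simp add: fr_carrier_iff supp_def)

lemma ring_free_ring: "ring (free_ring A S)"
proof (rule ringI)
  show "abelian_group (free_ring A S)"
    by (rule abelian_groupI)
       (auto simp: free_ring_simps add_closed_fr zero_closed_fr intro!: bexI[OF _ neg_closed_fr])
  show "Group.monoid (free_ring A S)"
    by (rule monoidI)
       (auto simp: free_ring_simps conv_closed conv_one_left conv_one_right intro!: mon_closed conv_assoc
             dest: fr_carrier_iff[THEN iffD1])
qed (auto simp: free_ring_simps conv_add_left conv_add_right)

lemma fr_a_inv:
  assumes "f \<in> fr_carrier A S"
  shows "\<ominus>\<^bsub>free_ring A S\<^esub> f = (\<lambda>w. - f w)"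
proof -
  interpret ring "free_ring A S" by (rule ring_free_ring)
  show ?thesis
    by (rule minus_equality) (auto simp: free_ring_simps assms neg_closed_fr)
qed

lemma sub_closed_fr:
  assumes "f \<in> fr_carrier A S" "g \<in> fr_carrier A S"
  shows "(\<lambda>w. f w - g w) \<in> fr_carrier A S"
  using add_closed_fr[OF assms(1) neg_closed_fr[OF assms(2)]] by simp

lemma scale_closed_fr:
  assumes "f \<in> fr_carrier A S"
  shows "(\<lambda>w. c * f w) \<in> fr_carrier A S"
  using assms by (auto simp: fr_carrier_iff supp_def)

lemma sum_mon_closed_fr:
  assumes "finite F" "\<And>u. u \<in> F \<Longrightarrow> set u \<subseteq> Inl ` A \<union> Inr ` S"
  shows "(\<lambda>w. \<Sum>u\<in>F. c u * mon u w) \<in> fr_carrier A S"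
proof -
  have "supp (\<lambda>w. \<Sum>u\<in>F. c u * mon u w) \<subseteq> F"
  proof
    fix w assume "w \<in> supp (\<lambda>w. \<Sum>u\<in>F. c u * mon u w)"
    then have "(\<Sum>u\<in>F. c u * mon u w) \<noteq> 0" by (simp add: supp_def)
    then obtain u where "u \<in> F" "c u * mon u w \<noteq> 0"
      by (meson sum.not_neutral_contains_not_neutral)
    then show "w \<in> F" by (auto simp: mon_def split: if_splits)
  qed
  note sub = this
  show ?thesis unfolding fr_carrier_iff
  proof
    show "finite (supp (\<lambda>w. \<Sum>u\<in>F. c u * mon u w))" using sub assms(1) by (rule finite_subset)
    show "\<forall>w\<in>supp (\<lambda>w. \<Sum>u\<in>F. c u * mon u w). set w \<subseteq> Inl ` A \<union> Inr ` S" using sub assms(2) by blast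
  qed
qed

lemma fr_induct:
  fixes P :: "(('a + 'a) list \<Rightarrow> int) \<Rightarrow> bool"
  assumes f: "f \<in> fr_carrier A S"
    and P0: "P (\<lambda>w. 0)"
    and Padd: "\<And>f g. f \<in> fr_carrier A S \<Longrightarrow> g \<in> fr_carrier A S \<Longrightarrow> P f \<Longrightarrow> P g \<Longrightarrow> P (\<lambda>w. f w + g w)"
    and Pneg: "\<And>f. f \<in> fr_carrier A S \<Longrightarrow> P f \<Longrightarrow> P (\<lambda>w. - f w)"
    and Pmul: "\<And>f g. f \<in> fr_carrier A S \<Longrightarrow> g \<in> fr_carrier A S \<Longrightarrow> P f \<Longrightarrow> P g \<Longrightarrow> P (conv f g)"
    and Pone: "P (mon [])"
    and Pl: "\<And>a. a \<in> A \<Longrightarrow> P (mon [Inl a])"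
    and Pr: "\<And>s. s \<in> S \<Longrightarrow> P (mon [Inr s])"
  shows "P f"
proof -
  have mon: "P (mon u)" if "set u \<subseteq> Inl ` A \<union> Inr ` S" for u
    using that
  proof (induction u)
    case Nil then show ?case using Pone by simp
  next
    case (Cons l u)
    have l: "mon [l] \<in> fr_carrier A S" "P (mon [l])"
      using Cons.prems Pl Pr by (auto intro: mon_closed)
    have "mon (l # u) = conv (mon [l]) (mon u)" by (simp add: conv_mon)
    then show ?case using Pmul[OF l(1) mon_closed l(2) Cons.IH] Cons.prems by simp
  qed
  have nat_scale: "P (\<lambda>w. int n * mon u w)" if "set u \<subseteq> Inl ` A \<union> Inr ` S" for u n
  proof (induction n)
    case 0 then show ?case using P0 by simp
  next
    case (Suc n)
    have "P (\<lambda>w. int n * mon u w + mon u w)"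
      by (rule Padd[OF scale_closed_fr[OF mon_closed[OF that]] mon_closed[OF that] Suc.IH mon[OF that]])
    then show ?case by (simp add: algebra_simps)
  qed
  have scale: "P (\<lambda>w. c * mon u w)" if "set u \<subseteq> Inl ` A \<union> Inr ` S" for u c
  proof (cases "c \<ge> 0")
    case True
    then show ?thesis using nat_scale[OF that, of "nat c"] by simp
  next
    case False
    have "P (\<lambda>w. - (int (nat (- c)) * mon u w))"
      by (rule Pneg[OF scale_closed_fr[OF mon_closed[OF that]] nat_scale[OF that]])
    then show ?thesis using False by simp
  qed
  have sums: "P (\<lambda>w. \<Sum>u\<in>F. c u * mon u w)"
    if "finite F" "\<And>u. u \<in> F \<Longrightarrow> set u \<subseteq> Inl ` A \<union> Inr ` S" for F c
    using that
  proof (induction F rule: finite_induct)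
    case empty then show ?case using P0 by simp
  next
    case (insert u F)
    have "P (\<lambda>w. c u * mon u w + (\<Sum>u\<in>F. c u * mon u w))"
      by (rule Padd[OF scale_closed_fr[OF mon_closed] sum_mon_closed_fr scale insert.IH])
         (use insert in auto)
    then show ?case using insert by simp
  qed
  have "finite (supp f)" "\<And>u. u \<in> supp f \<Longrightarrow> set u \<subseteq> Inl ` A \<union> Inr ` S"
    using f by (auto simp: fr_carrier_iff)
  from sums[OF this, of f] show ?thesis using decomp[OF \<open>finite (supp f)\<close>] by simp
qed

locale locS = R: ring R for R :: "('a, 'm) ring_scheme" +
  fixes S :: "'a set"
  assumes S_sub: "S \<subseteq> carrier R"
begin

abbreviation "FR \<equiv> free_ring (carrier R) S"
abbreviation "I \<equiv> loc_ideal R S"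
abbreviation "L \<equiv> loc R S"
abbreviation "sig \<equiv> loc_map R S"
abbreviation "xv \<equiv> loc_var R S"
abbreviation "hh \<equiv> (\<lambda>f. I +>\<^bsub>FR\<^esub> f)"

lemma FR_ring: "ring FR" by (rule ring_free_ring)

sublocale F: ring FR by (rule FR_ring)

lemma rels_sub: "loc_rels R S \<subseteq> carrier FR"
  using S_sub
  apply (auto simp: loc_rels_def free_ring_simps intro!: sub_closed_fr mon_closed)
  apply blast+
  done

lemma I_ideal: "ideal I FR"
  unfolding loc_ideal_def by (rule F.genideal_ideal[OF rels_sub])

lemma rels_I: "loc_rels R S \<subseteq> I"
  unfolding loc_ideal_def by (rule F.genideal_self[OF rels_sub])

lemma L_ring: "ring L"
  unfolding loc_def by (rule ideal.quotient_is_ring[OF I_ideal])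

sublocale Lr: ring L by (rule L_ring)

lemma hh_hom: "hh \<in> ring_hom FR L"
  unfolding loc_def by (rule ideal.rcos_ring_hom[OF I_ideal])

lemma L_zero: "\<zero>\<^bsub>L\<^esub> = I" by (simp add: loc_def FactRing_def)

lemma hh_zero_iff: "f \<in> carrier FR \<Longrightarrow> hh f = \<zero>\<^bsub>L\<^esub> \<longleftrightarrow> f \<in> I"
  using ideal.rcos_const_imp_mem[OF I_ideal] F.a_rcos_zero[OF I_ideal] L_zero by auto

lemma hh_closed: "f \<in> carrier FR \<Longrightarrow> hh f \<in> carrier L"
  using ring_hom_closed[OF hh_hom] .

lemma hh_add: "f \<in> carrier FR \<Longrightarrow> g \<in> carrier FR \<Longrightarrow> hh (\<lambda>w. f w + g w) = hh f \<oplus>\<^bsub>L\<^esub> hh g"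
proof -
  assume a: "f \<in> carrier FR" "g \<in> carrier FR"
  have e: "(\<lambda>w. f w + g w) = f \<oplus>\<^bsub>FR\<^esub> g" by (simp add: free_ring_simps)
  show ?thesis unfolding e by (rule ring_hom_add[OF hh_hom a])
qed

lemma hh_mult: "f \<in> carrier FR \<Longrightarrow> g \<in> carrier FR \<Longrightarrow> hh (conv f g) = hh f \<otimes>\<^bsub>L\<^esub> hh g"
proof -
  assume a: "f \<in> carrier FR" "g \<in> carrier FR"
  have e: "conv f g = f \<otimes>\<^bsub>FR\<^esub> g" by (simp add: free_ring_simps)
  show ?thesis unfolding e by (rule ring_hom_mult[OF hh_hom a])
qed

lemma hh_one: "hh (mon []) = \<one>\<^bsub>L\<^esub>"
  using ring_hom_one[OF hh_hom] by (simp add: free_ring_simps)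

lemma hh_eq:
  assumes "f \<in> carrier FR" "g \<in> carrier FR" "(\<lambda>w. f w - g w) \<in> I"
  shows "hh f = hh g"
proof -
  have d: "(\<lambda>w. f w - g w) \<in> carrier FR"
    using assms by (simp add: free_ring_simps sub_closed_fr)
  have "f = (\<lambda>w. (\<lambda>w. f w - g w) w + g w)" by simp
  then have "hh f = hh (\<lambda>w. f w - g w) \<oplus>\<^bsub>L\<^esub> hh g"
    using hh_add[OF d assms(2)] by metis
  also have "hh (\<lambda>w. f w - g w) = \<zero>\<^bsub>L\<^esub>" using hh_zero_iff[OF d] assms(3) by simp
  finally show ?thesis using hh_closed[OF assms(2)] by simp
qed

lemma hh_neg:
  assumes f: "f \<in> carrier FR"
  shows "hh (\<lambda>w. - f w) = \<ominus>\<^bsub>L\<^esub> hh f"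
proof -
  have nf: "(\<lambda>w. - f w) \<in> carrier FR" using f by (simp add: free_ring_simps neg_closed_fr)
  have "hh (\<lambda>w. - f w) \<oplus>\<^bsub>L\<^esub> hh f = hh (\<lambda>w. (\<lambda>w. - f w) w + f w)"
    using hh_add[OF nf f] by simp
  also have "\<dots> = hh \<zero>\<^bsub>FR\<^esub>" by (simp add: free_ring_simps)
  also have "\<dots> = \<zero>\<^bsub>L\<^esub>" using hh_zero_iff[OF F.zero_closed]
    ideal.axioms(1)[OF I_ideal] additive_subgroup.zero_closed by blast
  finally show ?thesis using Lr.minus_equality hh_closed nf f by metis
qed

lemma monl_closed: "r \<in> carrier R \<Longrightarrow> mon [Inl r] \<in> carrier FR"
  by (simp add: free_ring_simps mon_closed)

lemma monr_closed: "s \<in> S \<Longrightarrow> mon [Inr s] \<in> carrier FR"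
  by (simp add: free_ring_simps mon_closed)

lemma sig_def: "sig r = hh (mon [Inl r])" by (simp add: loc_map_def)
lemma xv_def: "xv s = hh (mon [Inr s])" by (simp add: loc_var_def)

lemma sig_hom: "sig \<in> ring_hom R L"
proof (rule ring_hom_memI)
  fix a b assume a: "a \<in> carrier R" and b: "b \<in> carrier R"
  show "sig a \<in> carrier L" using a by (simp add: sig_def hh_closed monl_closed)
  have "(\<lambda>w. mon [Inl (a \<otimes>\<^bsub>R\<^esub> b)] w - mon [Inl a, Inl b] w) \<in> I"
    using rels_I a b unfolding loc_rels_def by blast
  then have "hh (mon [Inl (a \<otimes>\<^bsub>R\<^esub> b)]) = hh (mon [Inl a, Inl b])"
    using a b by (intro hh_eq) (auto simp: free_ring_simps mon_closed)
  also have "mon [Inl a, Inl b] = conv (mon [Inl a]) (mon [Inl b])" by (simp add: conv_mon)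
  finally have e: "hh (mon [Inl (a \<otimes>\<^bsub>R\<^esub> b)]) = hh (conv (mon [Inl a]) (mon [Inl b]))" .
  show "sig (a \<otimes>\<^bsub>R\<^esub> b) = sig a \<otimes>\<^bsub>L\<^esub> sig b"
    unfolding sig_def e by (rule hh_mult[OF monl_closed[OF a] monl_closed[OF b]])
  have "(\<lambda>w. mon [Inl (a \<oplus>\<^bsub>R\<^esub> b)] w - mon [Inl a] w - mon [Inl b] w) \<in> loc_rels R S"
    unfolding loc_rels_def using a b by (intro UnI1) blast
  then have "(\<lambda>w. mon [Inl (a \<oplus>\<^bsub>R\<^esub> b)] w - mon [Inl a] w - mon [Inl b] w) \<in> I"
    using rels_I by blast
  moreover have "(\<lambda>w. mon [Inl (a \<oplus>\<^bsub>R\<^esub> b)] w - mon [Inl a] w - mon [Inl b] w)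
      = (\<lambda>w. mon [Inl (a \<oplus>\<^bsub>R\<^esub> b)] w - (\<lambda>w. mon [Inl a] w + mon [Inl b] w) w)" by (simp add: algebra_simps)
  ultimately have "hh (mon [Inl (a \<oplus>\<^bsub>R\<^esub> b)]) = hh (\<lambda>w. mon [Inl a] w + mon [Inl b] w)"
    using a b by (intro hh_eq) (auto simp: free_ring_simps mon_closed add_closed_fr)
  note e = this
  show "sig (a \<oplus>\<^bsub>R\<^esub> b) = sig a \<oplus>\<^bsub>L\<^esub> sig b"
    unfolding sig_def e by (rule hh_add[OF monl_closed[OF a] monl_closed[OF b]])
next
  have "(\<lambda>w. mon [Inl \<one>\<^bsub>R\<^esub>] w - mon [] w) \<in> I"
    using rels_I unfolding loc_rels_def by blast
  then have "hh (mon [Inl \<one>\<^bsub>R\<^esub>]) = hh (mon [])"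
    by (intro hh_eq) (auto simp: free_ring_simps mon_closed)
  then show "sig \<one>\<^bsub>R\<^esub> = \<one>\<^bsub>L\<^esub>" unfolding sig_def hh_one .
qed

lemma sig_hom_ring: "ring_hom_ring R L sig"
  by (rule ring_hom_ringI2[OF R.ring_axioms L_ring sig_hom])

sublocale sh: ring_hom_ring R L sig by (rule sig_hom_ring)

lemma xv_closed: "s \<in> S \<Longrightarrow> xv s \<in> carrier L"
  by (simp add: xv_def hh_closed monr_closed)

lemma sig_xv: "s \<in> S \<Longrightarrow> sig s \<otimes>\<^bsub>L\<^esub> xv s = \<one>\<^bsub>L\<^esub>"
proof -
  assume s: "s \<in> S"
  then have sR: "s \<in> carrier R" using S_sub by auto
  have "(\<lambda>w. mon [Inl s, Inr s] w - mon [] w) \<in> I"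
    using rels_I s unfolding loc_rels_def by blast
  then have "hh (mon [Inl s, Inr s]) = hh (mon [])"
    using s sR by (intro hh_eq) (auto simp: free_ring_simps mon_closed)
  moreover have "mon [Inl s, Inr s] = conv (mon [Inl s]) (mon [Inr s])" by (simp add: conv_mon)
  ultimately show ?thesis using hh_mult[OF monl_closed[OF sR] monr_closed[OF s]]
    by (simp only: sig_def xv_def hh_one)
qed

lemma xv_sig: "s \<in> S \<Longrightarrow> xv s \<otimes>\<^bsub>L\<^esub> sig s = \<one>\<^bsub>L\<^esub>"
proof -
  assume s: "s \<in> S"
  then have sR: "s \<in> carrier R" using S_sub by auto
  have "(\<lambda>w. mon [Inr s, Inl s] w - mon [] w) \<in> I"
    using rels_I s unfolding loc_rels_def by blast
  then have "hh (mon [Inr s, Inl s]) = hh (mon [])"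
    using s sR by (intro hh_eq) (auto simp: free_ring_simps mon_closed)
  moreover have "mon [Inr s, Inl s] = conv (mon [Inr s]) (mon [Inl s])" by (simp add: conv_mon)
  ultimately show ?thesis using hh_mult[OF monr_closed[OF s] monl_closed[OF sR]]
    by (simp only: sig_def xv_def hh_one)
qed

lemma sigS_closed: "s \<in> S \<Longrightarrow> sig s \<in> carrier L"
  using S_sub by (intro sh.hom_closed) auto

lemma sig_Units: "s \<in> S \<Longrightarrow> sig s \<in> Units L"
  unfolding Units_def using sigS_closed xv_closed sig_xv xv_sig by blast

lemma inv_sig: "s \<in> S \<Longrightarrow> inv\<^bsub>L\<^esub> (sig s) = xv s"
  using Lr.inv_unique'[OF sigS_closed xv_closed sig_xv xv_sig] by simp

lemma ass_kernel: "ass R S = a_kernel R L sig"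
  unfolding ass_def a_kernel_def' by (rule refl)

lemma ass_ideal: "ideal (ass R S) R"
  unfolding ass_kernel by (rule sh.kernel_is_ideal)

lemma loc_gen:
  assumes M: "M \<subseteq> carrier L"
    and add: "\<And>a b. a \<in> M \<Longrightarrow> b \<in> M \<Longrightarrow> a \<oplus>\<^bsub>L\<^esub> b \<in> M"
    and mul: "\<And>a b. a \<in> M \<Longrightarrow> b \<in> M \<Longrightarrow> a \<otimes>\<^bsub>L\<^esub> b \<in> M"
    and sg: "\<And>r. r \<in> carrier R \<Longrightarrow> sig r \<in> M"
    and xs: "\<And>s. s \<in> S \<Longrightarrow> xv s \<in> M"
  shows "carrier L \<subseteq> M"
proof
  fix X assume "X \<in> carrier L"
  then obtain f where f: "f \<in> carrier FR" and X: "X = hh f"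
    by (auto simp: loc_def FactRing_def A_RCOSETS_def')
  have neg: "\<ominus>\<^bsub>L\<^esub> a \<in> M" if "a \<in> M" for a
  proof -
    have "\<ominus>\<^bsub>L\<^esub> a = sig (\<ominus>\<^bsub>R\<^esub> \<one>\<^bsub>R\<^esub>) \<otimes>\<^bsub>L\<^esub> a"
      using that M Lr.l_minus[of "\<one>\<^bsub>L\<^esub>" a] by auto
    then show ?thesis using mul[OF sg[of "\<ominus>\<^bsub>R\<^esub> \<one>\<^bsub>R\<^esub>"] that] by simp
  qed
  have fc: "f \<in> fr_carrier (carrier R) S" using f by (simp add: free_ring_simps)
  have "hh f \<in> M"
  proof (rule fr_induct[where P="\<lambda>f. hh f \<in> M", OF fc])
    have z: "\<zero>\<^bsub>FR\<^esub> \<in> I" using additive_subgroup.zero_closed[OF ideal.axioms(1)[OF I_ideal]] .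
    have "hh \<zero>\<^bsub>FR\<^esub> = \<zero>\<^bsub>L\<^esub>" using hh_zero_iff[OF F.zero_closed] z by blast
    then have "hh (\<lambda>w. 0) = \<zero>\<^bsub>L\<^esub>" by (simp only: free_ring_simps)
    also have "\<dots> = sig \<zero>\<^bsub>R\<^esub>" by simp
    finally show "hh (\<lambda>w. 0) \<in> M" using sg[OF R.zero_closed] by simp
  next
    fix f g assume "f \<in> fr_carrier (carrier R) S" "g \<in> fr_carrier (carrier R) S" "hh f \<in> M" "hh g \<in> M"
    then show "hh (\<lambda>w. f w + g w) \<in> M" using hh_add[of f g] add by (simp add: free_ring_simps)
  next
    fix f assume "f \<in> fr_carrier (carrier R) S" "hh f \<in> M"
    then show "hh (\<lambda>w. - f w) \<in> M" using hh_neg[of f] neg by (simp add: free_ring_simps)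
  next
    fix f g assume "f \<in> fr_carrier (carrier R) S" "g \<in> fr_carrier (carrier R) S" "hh f \<in> M" "hh g \<in> M"
    then show "hh (conv f g) \<in> M" using hh_mult[of f g] mul by (simp add: free_ring_simps)
  next
    show "hh (mon []) \<in> M" using sg[of "\<one>\<^bsub>R\<^esub>"] hh_one by simp
  next
    fix a assume "a \<in> carrier R" then show "hh (mon [Inl a]) \<in> M" using sg[of a] by (simp only: sig_def)
  next
    fix s assume "s \<in> S" then show "hh (mon [Inr s]) \<in> M" using xs[of s] by (simp only: xv_def)
  qed
  then show "X \<in> M" using f X by simp
qed

end

lemma conv_sums:
  "conv (\<lambda>w. \<Sum>u\<in>U. a u * mon u w) (\<lambda>w. \<Sum>v\<in>V. b v * mon v w)
   = (\<lambda>w. \<Sum>u\<in>U. \<Sum>v\<in>V. (a u * b v) * mon (u @ v) w)"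
  by (simp add: conv_sum_left conv_sum_right conv_scale_left conv_scale_right conv_mon
       sum_distrib_left mult.assoc)

lemma finite_supp_sum_mon:
  assumes "finite A"
  shows "finite (supp (\<lambda>w. \<Sum>a\<in>A. c a * mon (p a) w))"
proof (rule finite_subset)
  show "supp (\<lambda>w. \<Sum>a\<in>A. c a * mon (p a) w) \<subseteq> p ` A"
  proof
    fix w assume "w \<in> supp (\<lambda>w. \<Sum>a\<in>A. c a * mon (p a) w)"
    then have "(\<Sum>a\<in>A. c a * mon (p a) w) \<noteq> 0" by (simp add: supp_def)
    then obtain a where "a \<in> A" "c a * mon (p a) w \<noteq> 0"
      by (meson sum.not_neutral_contains_not_neutral)
    then show "w \<in> p ` A" by (auto simp: mon_def split: if_splits)
  qed
  show "finite (p ` A)" using assms by simp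
qed

locale evl = Q: ring Q for Q :: "('q, 'n) ring_scheme" +
  fixes el er :: "'a \<Rightarrow> 'q"
  assumes el: "el a \<in> carrier Q" and er: "er s \<in> carrier Q"
begin

definition weval :: "('a + 'a) list \<Rightarrow> 'q" where
  "weval w = foldr (\<lambda>l acc. case_sum el er l \<otimes>\<^bsub>Q\<^esub> acc) w \<one>\<^bsub>Q\<^esub>"

definition ev :: "(('a + 'a) list \<Rightarrow> int) \<Rightarrow> 'q" where
  "ev f = finsum Q (\<lambda>w. add_pow Q (f w) (weval w)) (supp f)"

lemma letter_closed: "case_sum el er l \<in> carrier Q"
  by (cases l) (auto simp: el er)

lemma weval_closed: "weval w \<in> carrier Q"
  by (induction w) (auto simp: weval_def letter_closed)

lemma weval_append: "weval (u @ v) = weval u \<otimes>\<^bsub>Q\<^esub> weval v"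
  by (induction u) (auto simp: weval_def letter_closed weval_closed[unfolded weval_def] Q.m_assoc)

lemma weval_Nil: "weval [] = \<one>\<^bsub>Q\<^esub>" by (simp add: weval_def)

lemma weval_single: "weval [l] = case_sum el er l" by (simp add: weval_def letter_closed)

lemma term_closed: "add_pow Q (k::int) (weval w) \<in> carrier Q"
  by (rule Q.add.int_pow_closed[OF weval_closed])

lemma add_pow_zero_int [simp]: "add_pow Q (0::int) x = \<zero>\<^bsub>Q\<^esub>"
  by (simp add: add_pow_def)

lemma ev_super:
  assumes "finite F" "supp f \<subseteq> F"
  shows "ev f = finsum Q (\<lambda>w. add_pow Q (f w) (weval w)) F"
  unfolding ev_def
proof (rule Q.add.finprod_mono_neutral_cong_left[OF assms])
  fix i assume "i \<in> F - supp f"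
  then have "f i = 0" by (simp add: supp_def)
  then show "add_pow Q (f i) (weval i) = \<zero>\<^bsub>Q\<^esub>" using weval_closed by simp
qed (auto simp: term_closed)

lemma ev_closed: "ev f \<in> carrier Q"
  unfolding ev_def by (rule Q.finsum_closed) (auto simp: term_closed)

lemma ev_add:
  assumes "finite (supp f)" "finite (supp g)"
  shows "ev (\<lambda>w. f w + g w) = ev f \<oplus>\<^bsub>Q\<^esub> ev g"
proof -
  let ?F = "supp f \<union> supp g"
  have fin: "finite ?F" using assms by simp
  have "supp (\<lambda>w. f w + g w) \<subseteq> ?F" by (auto simp: supp_def)
  then have "ev (\<lambda>w. f w + g w) = finsum Q (\<lambda>w. add_pow Q (f w + g w) (weval w)) ?F"
    by (rule ev_super[OF fin])
  also have "\<dots> = finsum Q (\<lambda>w. add_pow Q (f w) (weval w) \<oplus>\<^bsub>Q\<^esub> add_pow Q (g w) (weval w)) ?F"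
    using Q.add.int_pow_mult weval_closed by simp
  also have "\<dots> = finsum Q (\<lambda>w. add_pow Q (f w) (weval w)) ?F \<oplus>\<^bsub>Q\<^esub> finsum Q (\<lambda>w. add_pow Q (g w) (weval w)) ?F"
    by (rule Q.finsum_addf) (auto simp: term_closed)
  also have "\<dots> = ev f \<oplus>\<^bsub>Q\<^esub> ev g"
    using ev_super[OF fin, of f] ev_super[OF fin, of g] by auto
  finally show ?thesis .
qed

lemma ev_zero: "ev (\<lambda>w. 0) = \<zero>\<^bsub>Q\<^esub>"
  by (simp add: ev_def supp_def)

lemma ev_scale_mon: "ev (\<lambda>w. c * mon u w) = add_pow Q c (weval u)"
proof -
  have "supp (\<lambda>w. c * mon u w) \<subseteq> {u}" by (auto simp: supp_def mon_def)
  then have "ev (\<lambda>w. c * mon u w) = finsum Q (\<lambda>w. add_pow Q (c * mon u w) (weval w)) {u}"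
    by (rule ev_super[rotated]) simp
  also have "\<dots> = add_pow Q c (weval u)" by (simp add: mon_def term_closed)
  finally show ?thesis .
qed

lemma ev_sum:
  assumes "finite A" "\<And>a. a \<in> A \<Longrightarrow> finite (supp (G a))"
  shows "ev (\<lambda>w. \<Sum>a\<in>A. G a w) = finsum Q (\<lambda>a. ev (G a)) A"
  using assms
proof (induction A rule: finite_induct)
  case empty then show ?case by (simp add: ev_zero)
next
  case (insert x A)
  have fs: "finite (supp (\<lambda>w. \<Sum>a\<in>A. G a w))"
  proof (rule finite_subset)
    show "supp (\<lambda>w. \<Sum>a\<in>A. G a w) \<subseteq> (\<Union>a\<in>A. supp (G a))"
    proof
      fix w assume "w \<in> supp (\<lambda>w. \<Sum>a\<in>A. G a w)"
      then have "(\<Sum>a\<in>A. G a w) \<noteq> 0" by (simp add: supp_def)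
      then obtain a where "a \<in> A" "G a w \<noteq> 0" by (meson sum.not_neutral_contains_not_neutral)
      then show "w \<in> (\<Union>a\<in>A. supp (G a))" by (auto simp: supp_def)
    qed
    show "finite (\<Union>a\<in>A. supp (G a))" using insert by auto
  qed
  have "ev (\<lambda>w. \<Sum>a\<in>insert x A. G a w) = ev (\<lambda>w. G x w + (\<lambda>w. \<Sum>a\<in>A. G a w) w)"
    using insert by simp
  also have "\<dots> = ev (G x) \<oplus>\<^bsub>Q\<^esub> ev (\<lambda>w. \<Sum>a\<in>A. G a w)"
    by (rule ev_add) (use insert fs in auto)
  also have "\<dots> = finsum Q (\<lambda>a. ev (G a)) (insert x A)"
    using insert by (simp add: ev_closed)
  finally show ?case .
qed

lemma pow_mult_pow:
  fixes m n :: int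
  assumes "x \<in> carrier Q" "y \<in> carrier Q"
  shows "add_pow Q m x \<otimes>\<^bsub>Q\<^esub> add_pow Q n y = add_pow Q (m * n) (x \<otimes>\<^bsub>Q\<^esub> y)"
proof -
  have "add_pow Q m x \<otimes>\<^bsub>Q\<^esub> add_pow Q n y = add_pow Q m (x \<otimes>\<^bsub>Q\<^esub> add_pow Q n y)"
    by (rule Q.add_pow_ldistr_int[OF assms(1) Q.add.int_pow_closed[OF assms(2)]])
  also have "\<dots> = add_pow Q m (add_pow Q n (x \<otimes>\<^bsub>Q\<^esub> y))"
    using Q.add_pow_rdistr_int[OF assms] by simp
  also have "\<dots> = add_pow Q (n * m) (x \<otimes>\<^bsub>Q\<^esub> y)"
    using assms by (simp add: Q.add.int_pow_pow)
  finally show ?thesis by (simp add: mult.commute)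
qed

lemma ev_conv:
  assumes f: "finite (supp f)" and g: "finite (supp g)"
  shows "ev (conv f g) = ev f \<otimes>\<^bsub>Q\<^esub> ev g"
proof -
  let ?U = "supp f" and ?V = "supp g"
  have "conv f g = (\<lambda>w. \<Sum>u\<in>?U. \<Sum>v\<in>?V. (f u * g v) * mon (u @ v) w)"
    using conv_sums[of f ?U g ?V] by (simp only: decomp[OF f] decomp[OF g])
  then have "ev (conv f g) = ev (\<lambda>w. \<Sum>u\<in>?U. (\<lambda>u w. \<Sum>v\<in>?V. (f u * g v) * mon (u @ v) w) u w)"
    by simp
  also have "\<dots> = finsum Q (\<lambda>u. ev (\<lambda>w. \<Sum>v\<in>?V. (f u * g v) * mon (u @ v) w)) ?U"
  proof (rule ev_sum[OF f])
    fix u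
    show "finite (supp (\<lambda>w. \<Sum>v\<in>?V. f u * g v * mon (u @ v) w))"
      by (rule finite_supp_sum_mon[OF g])
  qed
  also have "\<dots> = finsum Q (\<lambda>u. finsum Q (\<lambda>v. add_pow Q (f u * g v) (weval (u @ v))) ?V) ?U"
  proof (rule Q.finsum_cong')
    fix u
    show "ev (\<lambda>w. \<Sum>v\<in>?V. (f u * g v) * mon (u @ v) w) = finsum Q (\<lambda>v. add_pow Q (f u * g v) (weval (u @ v))) ?V"
      using ev_sum[OF g, of "\<lambda>v w. (f u * g v) * mon (u @ v) w"] ev_scale_mon
      by (simp add: supp_def mon_def)
  qed (auto intro!: Q.finsum_closed simp: term_closed)
  also have "\<dots> = finsum Q (\<lambda>u. finsum Q (\<lambda>v. add_pow Q (f u) (weval u) \<otimes>\<^bsub>Q\<^esub> add_pow Q (g v) (weval v)) ?V) ?U"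
    by (simp add: pow_mult_pow weval_closed weval_append)
  also have "\<dots> = finsum Q (\<lambda>u. add_pow Q (f u) (weval u) \<otimes>\<^bsub>Q\<^esub> ev g) ?U"
    unfolding ev_def
    by (rule Q.finsum_cong') (auto simp: Q.finsum_rdistr[OF g] term_closed)
  also have "\<dots> = ev f \<otimes>\<^bsub>Q\<^esub> ev g"
    unfolding ev_def[of f]
    by (rule Q.finsum_ldistr[OF f, symmetric]) (auto simp: term_closed ev_closed)
  finally show ?thesis .
qed

lemma ev_hom: "ev \<in> ring_hom (free_ring A S) Q"
proof (rule ring_hom_memI)
  fix f g assume f: "f \<in> carrier (free_ring A S)" and g: "g \<in> carrier (free_ring A S)"
  then have ff: "finite (supp f)" and fg: "finite (supp g)" by (auto simp: free_ring_simps fr_carrier_iff)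
  show "ev f \<in> carrier Q" by (rule ev_closed)
  show "ev (f \<otimes>\<^bsub>free_ring A S\<^esub> g) = ev f \<otimes>\<^bsub>Q\<^esub> ev g"
    using ev_conv[OF ff fg] by (simp add: free_ring_simps)
  show "ev (f \<oplus>\<^bsub>free_ring A S\<^esub> g) = ev f \<oplus>\<^bsub>Q\<^esub> ev g"
    using ev_add[OF ff fg] by (simp add: free_ring_simps)
next
  have "ev (\<lambda>w. 1 * mon [] w) = \<one>\<^bsub>Q\<^esub>" by (simp only: ev_scale_mon weval_Nil) simp
  then show "ev \<one>\<^bsub>free_ring A S\<^esub> = \<one>\<^bsub>Q\<^esub>" by (simp add: free_ring_simps)
qed

lemma ev_letter: "ev (mon [l]) = case_sum el er l"
proof -
  have "ev (\<lambda>w. 1 * mon [l] w) = case_sum el er l" by (simp only: ev_scale_mon weval_single) (simp add: letter_closed)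
  then show ?thesis by simp
qed

end

lemma hom_eq_transfer:
  assumes f: "ring_hom_ring R A f" and g: "ring_hom_ring R B g"
    and ker: "\<And>x. x \<in> carrier R \<Longrightarrow> f x = \<zero>\<^bsub>A\<^esub> \<Longrightarrow> g x = \<zero>\<^bsub>B\<^esub>"
    and a: "a \<in> carrier R" and b: "b \<in> carrier R" and eq: "f a = f b"
  shows "g a = g b"
proof -
  interpret f: ring_hom_ring R A f by (rule f)
  interpret g: ring_hom_ring R B g by (rule g)
  have "f (a \<oplus>\<^bsub>R\<^esub> \<ominus>\<^bsub>R\<^esub> b) = f a \<oplus>\<^bsub>A\<^esub> \<ominus>\<^bsub>A\<^esub> f b" using a b by simp
  also have "\<dots> = \<zero>\<^bsub>A\<^esub>" using eq b by (simp add: f.S.r_neg)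
  finally have "g (a \<oplus>\<^bsub>R\<^esub> \<ominus>\<^bsub>R\<^esub> b) = \<zero>\<^bsub>B\<^esub>" using ker a b by simp
  then have "g a \<oplus>\<^bsub>B\<^esub> \<ominus>\<^bsub>B\<^esub> g b = \<zero>\<^bsub>B\<^esub>" using a b by simp
  then show ?thesis using a b
    by (metis g.S.add.inv_closed g.S.minus_equality g.S.minus_minus g.hom_closed)
qed

context locS
begin

lemma sig_xv_assoc: "s \<in> S \<Longrightarrow> y \<in> carrier L \<Longrightarrow> sig s \<otimes>\<^bsub>L\<^esub> (xv s \<otimes>\<^bsub>L\<^esub> y) = y"
  by (simp add: Lr.m_assoc[symmetric] sigS_closed xv_closed sig_xv)

lemma xv_sig_assoc: "s \<in> S \<Longrightarrow> y \<in> carrier L \<Longrightarrow> xv s \<otimes>\<^bsub>L\<^esub> (sig s \<otimes>\<^bsub>L\<^esub> y) = y"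
  by (simp add: Lr.m_assoc[symmetric] sigS_closed xv_closed xv_sig)

lemma sS: "s \<in> S \<Longrightarrow> s \<in> carrier R" using S_sub by auto

lemmas Lsimps = Lr.m_assoc sig_xv_assoc xv_sig_assoc sig_xv xv_sig sigS_closed xv_closed sh.hom_closed sS

lemma ore_to_rel_left:
  assumes s: "s \<in> S" "s' \<in> S" and x: "x \<in> carrier R" "r' \<in> carrier R"
    and eq: "sig x \<otimes>\<^bsub>L\<^esub> xv s = xv s' \<otimes>\<^bsub>L\<^esub> sig r'"
  shows "sig (s' \<otimes>\<^bsub>R\<^esub> x) = sig (r' \<otimes>\<^bsub>R\<^esub> s)"
proof -
  have "sig (s' \<otimes>\<^bsub>R\<^esub> x) = sig s' \<otimes>\<^bsub>L\<^esub> ((sig x \<otimes>\<^bsub>L\<^esub> xv s) \<otimes>\<^bsub>L\<^esub> sig s)"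
    using s x by (simp add: Lsimps)
  also have "\<dots> = sig s' \<otimes>\<^bsub>L\<^esub> ((xv s' \<otimes>\<^bsub>L\<^esub> sig r') \<otimes>\<^bsub>L\<^esub> sig s)" by (simp only: eq)
  also have "\<dots> = sig (r' \<otimes>\<^bsub>R\<^esub> s)" using s x by (simp add: Lsimps)
  finally show ?thesis .
qed

lemma rel_to_ore_left:
  assumes s: "s \<in> S" "s' \<in> S" and x: "x \<in> carrier R" "r' \<in> carrier R"
    and eq: "sig (s' \<otimes>\<^bsub>R\<^esub> x) = sig (r' \<otimes>\<^bsub>R\<^esub> s)"
  shows "sig x \<otimes>\<^bsub>L\<^esub> xv s = xv s' \<otimes>\<^bsub>L\<^esub> sig r'"
proof -
  have "sig x \<otimes>\<^bsub>L\<^esub> xv s = xv s' \<otimes>\<^bsub>L\<^esub> (sig (s' \<otimes>\<^bsub>R\<^esub> x) \<otimes>\<^bsub>L\<^esub> xv s)"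
    using s x by (simp add: Lsimps)
  also have "\<dots> = xv s' \<otimes>\<^bsub>L\<^esub> (sig (r' \<otimes>\<^bsub>R\<^esub> s) \<otimes>\<^bsub>L\<^esub> xv s)" by (simp only: eq)
  also have "\<dots> = xv s' \<otimes>\<^bsub>L\<^esub> sig r'" using s x by (simp add: Lsimps)
  finally show ?thesis .
qed

lemma ore_to_rel_right:
  assumes s: "s \<in> S" "s' \<in> S" and x: "x \<in> carrier R" "r' \<in> carrier R"
    and eq: "xv s \<otimes>\<^bsub>L\<^esub> sig x = sig r' \<otimes>\<^bsub>L\<^esub> xv s'"
  shows "sig (x \<otimes>\<^bsub>R\<^esub> s') = sig (s \<otimes>\<^bsub>R\<^esub> r')"
proof -
  have "sig (x \<otimes>\<^bsub>R\<^esub> s') = sig s \<otimes>\<^bsub>L\<^esub> ((xv s \<otimes>\<^bsub>L\<^esub> sig x) \<otimes>\<^bsub>L\<^esub> sig s')"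
    using s x by (simp add: Lsimps)
  also have "\<dots> = sig s \<otimes>\<^bsub>L\<^esub> ((sig r' \<otimes>\<^bsub>L\<^esub> xv s') \<otimes>\<^bsub>L\<^esub> sig s')" by (simp only: eq)
  also have "\<dots> = sig (s \<otimes>\<^bsub>R\<^esub> r')" using s x by (simp add: Lsimps)
  finally show ?thesis .
qed

lemma rel_to_ore_right:
  assumes s: "s \<in> S" "s' \<in> S" and x: "x \<in> carrier R" "r' \<in> carrier R"
    and eq: "sig (x \<otimes>\<^bsub>R\<^esub> s') = sig (s \<otimes>\<^bsub>R\<^esub> r')"
  shows "xv s \<otimes>\<^bsub>L\<^esub> sig x = sig r' \<otimes>\<^bsub>L\<^esub> xv s'"
proof -
  have "xv s \<otimes>\<^bsub>L\<^esub> sig x = xv s \<otimes>\<^bsub>L\<^esub> (sig (x \<otimes>\<^bsub>R\<^esub> s') \<otimes>\<^bsub>L\<^esub> xv s')"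
    using s x by (simp add: Lsimps)
  also have "\<dots> = xv s \<otimes>\<^bsub>L\<^esub> (sig (s \<otimes>\<^bsub>R\<^esub> r') \<otimes>\<^bsub>L\<^esub> xv s')" by (simp only: eq)
  also have "\<dots> = sig r' \<otimes>\<^bsub>L\<^esub> xv s'" using s x by (simp add: Lsimps)
  finally show ?thesis .
qed

lemma xv_mult:
  assumes s: "s \<in> S" "t \<in> S" "t \<otimes>\<^bsub>R\<^esub> s \<in> S"
  shows "xv s \<otimes>\<^bsub>L\<^esub> xv t = xv (t \<otimes>\<^bsub>R\<^esub> s)"
proof -
  have c: "sig (t \<otimes>\<^bsub>R\<^esub> s) \<in> carrier L" "xv s \<otimes>\<^bsub>L\<^esub> xv t \<in> carrier L" using s by (simp_all add: Lsimps)
  have "sig (t \<otimes>\<^bsub>R\<^esub> s) \<otimes>\<^bsub>L\<^esub> (xv s \<otimes>\<^bsub>L\<^esub> xv t) = \<one>\<^bsub>L\<^esub>" using s by (simp add: Lsimps)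
  moreover have "(xv s \<otimes>\<^bsub>L\<^esub> xv t) \<otimes>\<^bsub>L\<^esub> sig (t \<otimes>\<^bsub>R\<^esub> s) = \<one>\<^bsub>L\<^esub>" using s by (simp add: Lsimps)
  ultimately have "xv s \<otimes>\<^bsub>L\<^esub> xv t = inv\<^bsub>L\<^esub> sig (t \<otimes>\<^bsub>R\<^esub> s)"
    using Lr.inv_unique'[OF c] by simp
  then show ?thesis using inv_sig[OF s(3)] by simp
qed

lemma xv_one: "\<one>\<^bsub>R\<^esub> \<in> S \<Longrightarrow> xv \<one>\<^bsub>R\<^esub> = \<one>\<^bsub>L\<^esub>"
  using inv_sig[of "\<one>\<^bsub>R\<^esub>"] by simp

end

lemma localizable_basic:
  "localizable t R S \<Longrightarrow> mult_set R S \<and> \<one>\<^bsub>loc R S\<^esub> \<noteq> \<zero>\<^bsub>loc R S\<^esub>"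
  by (cases t) (auto simp: left_localizable_def right_localizable_def)

lemma quot_facts:
  assumes "ring R" "ideal I R"
  shows "ring (R Quot I)" "ring_hom_ring R (R Quot I) ((+>\<^bsub>R\<^esub>) I)"
    "\<And>x. x \<in> carrier R \<Longrightarrow> I +>\<^bsub>R\<^esub> x = \<zero>\<^bsub>R Quot I\<^esub> \<longleftrightarrow> x \<in> I"
    "carrier (R Quot I) = (+>\<^bsub>R\<^esub>) I ` carrier R"
proof -
  interpret R: ring R by fact
  interpret ideal I R by fact
  show "ring (R Quot I)" by (rule quotient_is_ring)
  show "ring_hom_ring R (R Quot I) ((+>\<^bsub>R\<^esub>) I)" by (rule rcos_ring_hom_ring)
  show "\<And>x. x \<in> carrier R \<Longrightarrow> I +>\<^bsub>R\<^esub> x = \<zero>\<^bsub>R Quot I\<^esub> \<longleftrightarrow> x \<in> I"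
    using rcos_const_imp_mem R.a_rcos_zero[OF assms(2)] by (auto simp: FactRing_def)
  show "carrier (R Quot I) = (+>\<^bsub>R\<^esub>) I ` carrier R"
    by (auto simp: FactRing_def A_RCOSETS_def')
qed

lemma part_A:
  assumes R: "ring R" and lz: "localizable t R S"
  shows "reg_Ore t (R Quot ass R S) ((+>\<^bsub>R\<^esub>) (ass R S) ` S)"
proof -
  have ms: "mult_set R S" and nz: "\<one>\<^bsub>loc R S\<^esub> \<noteq> \<zero>\<^bsub>loc R S\<^esub>"
    using localizable_basic[OF lz] by auto
  interpret locS R S using R ms by (simp add: locS_def locS_axioms_def mult_set_def)
  define a where "a = ass R S"
  define A where "A = R Quot a"
  define \<pi> where "\<pi> = (+>\<^bsub>R\<^esub>) a"
  have aI: "ideal a R" unfolding a_def by (rule ass_ideal)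
  have A: "ring A" and ph: "ring_hom_ring R A \<pi>"
    and pz: "\<And>x. x \<in> carrier R \<Longrightarrow> \<pi> x = \<zero>\<^bsub>A\<^esub> \<longleftrightarrow> x \<in> a"
    and cA: "carrier A = \<pi> ` carrier R"
    using quot_facts[OF R aI] unfolding A_def \<pi>_def by auto
  interpret A: ring A by (rule A)
  interpret ph: ring_hom_ring R A \<pi> by (rule ph)
  have sz: "\<And>x. x \<in> carrier R \<Longrightarrow> sig x = \<zero>\<^bsub>L\<^esub> \<longleftrightarrow> x \<in> a"
    unfolding a_def ass_def by auto
  have tr: "\<pi> x = \<pi> y" if "x \<in> carrier R" "y \<in> carrier R" "sig x = sig y" for x y
    by (rule hom_eq_transfer[OF sig_hom_ring ph _ that]) (use sz pz in auto)
  have sS': "s \<in> carrier R" if "s \<in> S" for s using that S_sub by auto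
  have ms': "mult_set A (\<pi> ` S)"
    unfolding mult_set_def
  proof (intro conjI ballI)
    show "\<pi> ` S \<subseteq> carrier A" using S_sub by auto
    show "\<one>\<^bsub>A\<^esub> \<in> \<pi> ` S" using ms ph.hom_one by (force simp: mult_set_def)
    show "\<zero>\<^bsub>A\<^esub> \<notin> \<pi> ` S"
    proof
      assume "\<zero>\<^bsub>A\<^esub> \<in> \<pi> ` S"
      then obtain s where s: "s \<in> S" "\<pi> s = \<zero>\<^bsub>A\<^esub>" by auto
      then have "s \<in> a" using pz[OF sS'[OF s(1)]] by simp
      then have "sig s = \<zero>\<^bsub>L\<^esub>" using sz[OF sS'[OF s(1)]] by simp
      then have "\<one>\<^bsub>L\<^esub> = \<zero>\<^bsub>L\<^esub>" using sig_xv[OF s(1)] xv_closed[OF s(1)] by simp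
      then show False using nz by simp
    qed
    fix u v assume "u \<in> \<pi> ` S" "v \<in> \<pi> ` S"
    then obtain s s' where ss: "s \<in> S" "s' \<in> S" "u = \<pi> s" "v = \<pi> s'" by auto
    then have "s \<otimes>\<^bsub>R\<^esub> s' \<in> S" using ms by (simp add: mult_set_def)
    moreover have "u \<otimes>\<^bsub>A\<^esub> v = \<pi> (s \<otimes>\<^bsub>R\<^esub> s')" using ss sS' by simp
    ultimately show "u \<otimes>\<^bsub>A\<^esub> v \<in> \<pi> ` S" by blast
  qed
  have reg: "regular A u" if "u \<in> \<pi> ` S" for u
  proof -
    obtain s where s: "s \<in> S" "u = \<pi> s" using \<open>u \<in> \<pi> ` S\<close> by auto
    have sR: "s \<in> carrier R" using sS' s by auto
    show ?thesis unfolding regular_def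
    proof (intro conjI ballI impI)
      show "u \<in> carrier A" using s sR by simp
      fix b assume b: "b \<in> carrier A"
      then obtain x where x: "x \<in> carrier R" "b = \<pi> x" using cA by auto
      {
        assume "u \<otimes>\<^bsub>A\<^esub> b = \<zero>\<^bsub>A\<^esub>"
        then have "\<pi> (s \<otimes>\<^bsub>R\<^esub> x) = \<zero>\<^bsub>A\<^esub>" using s x sR by simp
        then have "s \<otimes>\<^bsub>R\<^esub> x \<in> a" using pz[OF R.m_closed[OF sR x(1)]] by simp
        then have "sig (s \<otimes>\<^bsub>R\<^esub> x) = \<zero>\<^bsub>L\<^esub>" using sz[OF R.m_closed[OF sR x(1)]] by simp
        then have "sig s \<otimes>\<^bsub>L\<^esub> sig x = \<zero>\<^bsub>L\<^esub>" using sR x by simp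
        then have "xv s \<otimes>\<^bsub>L\<^esub> (sig s \<otimes>\<^bsub>L\<^esub> sig x) = \<zero>\<^bsub>L\<^esub>" using xv_closed[OF s(1)] by simp
        then have "sig x = \<zero>\<^bsub>L\<^esub>" using xv_sig_assoc[OF s(1)] x by simp
        then have "x \<in> a" using sz[OF x(1)] by simp
        then show "b = \<zero>\<^bsub>A\<^esub>" using pz[OF x(1)] x(2) by simp
      }
      {
        assume "b \<otimes>\<^bsub>A\<^esub> u = \<zero>\<^bsub>A\<^esub>"
        then have "\<pi> (x \<otimes>\<^bsub>R\<^esub> s) = \<zero>\<^bsub>A\<^esub>" using s x sR by simp
        then have "x \<otimes>\<^bsub>R\<^esub> s \<in> a" using pz[OF R.m_closed[OF x(1) sR]] by simp
        then have "sig (x \<otimes>\<^bsub>R\<^esub> s) = \<zero>\<^bsub>L\<^esub>" using sz[OF R.m_closed[OF x(1) sR]] by simp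
        then have "sig x \<otimes>\<^bsub>L\<^esub> sig s = \<zero>\<^bsub>L\<^esub>" using sR x by simp
        then have "(sig x \<otimes>\<^bsub>L\<^esub> sig s) \<otimes>\<^bsub>L\<^esub> xv s = \<zero>\<^bsub>L\<^esub>" using xv_closed[OF s(1)] by simp
        then have "sig x = \<zero>\<^bsub>L\<^esub>" using x s by (simp add: Lsimps)
        then have "x \<in> a" using sz[OF x(1)] by simp
        then show "b = \<zero>\<^bsub>A\<^esub>" using pz[OF x(1)] x(2) by simp
      }
    qed
  qed
  have left: "\<exists>u'\<in>\<pi> ` S. \<exists>b'\<in>carrier A. u' \<otimes>\<^bsub>A\<^esub> b = b' \<otimes>\<^bsub>A\<^esub> u"
    if ll: "left_localizable R S" and b: "b \<in> carrier A" and u: "u \<in> \<pi> ` S" for b u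
  proof -
    obtain s where s: "s \<in> S" "u = \<pi> s" using u by auto
    obtain x where x: "x \<in> carrier R" "b = \<pi> x" using cA b by auto
    have "sig x \<otimes>\<^bsub>L\<^esub> xv s \<in> carrier L" using x s by (simp add: Lsimps)
    then obtain s' r' where s': "s' \<in> S" "r' \<in> carrier R" "sig x \<otimes>\<^bsub>L\<^esub> xv s = xv s' \<otimes>\<^bsub>L\<^esub> sig r'"
      using ll unfolding left_localizable_def by blast
    have "sig (s' \<otimes>\<^bsub>R\<^esub> x) = sig (r' \<otimes>\<^bsub>R\<^esub> s)" by (rule ore_to_rel_left[OF s(1) s'(1) x(1) s'(2) s'(3)])
    then have "\<pi> (s' \<otimes>\<^bsub>R\<^esub> x) = \<pi> (r' \<otimes>\<^bsub>R\<^esub> s)" by (rule tr[OF R.m_closed[OF sS'[OF s'(1)] x(1)] R.m_closed[OF s'(2) sS'[OF s(1)]]])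
    then have "\<pi> s' \<otimes>\<^bsub>A\<^esub> b = \<pi> r' \<otimes>\<^bsub>A\<^esub> u" using sS' s s' x by simp
    moreover have "\<pi> s' \<in> \<pi> ` S" using s' by blast
    moreover have "\<pi> r' \<in> carrier A" using s' by simp
    ultimately show ?thesis by blast
  qed
  have right: "\<exists>u'\<in>\<pi> ` S. \<exists>b'\<in>carrier A. b \<otimes>\<^bsub>A\<^esub> u' = u \<otimes>\<^bsub>A\<^esub> b'"
    if rl: "right_localizable R S" and b: "b \<in> carrier A" and u: "u \<in> \<pi> ` S" for b u
  proof -
    obtain s where s: "s \<in> S" "u = \<pi> s" using u by auto
    obtain x where x: "x \<in> carrier R" "b = \<pi> x" using cA b by auto
    have "xv s \<otimes>\<^bsub>L\<^esub> sig x \<in> carrier L" using x s by (simp add: Lsimps)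
    then obtain s' r' where s': "s' \<in> S" "r' \<in> carrier R" "xv s \<otimes>\<^bsub>L\<^esub> sig x = sig r' \<otimes>\<^bsub>L\<^esub> xv s'"
      using rl unfolding right_localizable_def by blast
    have "sig (x \<otimes>\<^bsub>R\<^esub> s') = sig (s \<otimes>\<^bsub>R\<^esub> r')" by (rule ore_to_rel_right[OF s(1) s'(1) x(1) s'(2) s'(3)])
    then have "\<pi> (x \<otimes>\<^bsub>R\<^esub> s') = \<pi> (s \<otimes>\<^bsub>R\<^esub> r')" by (rule tr[OF R.m_closed[OF x(1) sS'[OF s'(1)]] R.m_closed[OF sS'[OF s(1)] s'(2)]])
    then have "b \<otimes>\<^bsub>A\<^esub> \<pi> s' = u \<otimes>\<^bsub>A\<^esub> \<pi> r'" using sS' s s' x by simp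
    moreover have "\<pi> s' \<in> \<pi> ` S" using s' by blast
    moreover have "\<pi> r' \<in> carrier A" using s' by simp
    ultimately show ?thesis by blast
  qed
  show ?thesis
  proof (cases t)
    case Lft
    then show ?thesis using lz ms' reg left unfolding A_def[symmetric] \<pi>_def[symmetric] a_def[symmetric]
      by (simp add: reg_left_Ore_def)
  next
    case Rgt
    then show ?thesis using lz ms' reg right unfolding A_def[symmetric] \<pi>_def[symmetric] a_def[symmetric]
      by (simp add: reg_right_Ore_def)
  next
    case Two
    then show ?thesis using lz ms' reg left right unfolding A_def[symmetric] \<pi>_def[symmetric] a_def[symmetric]
      by (simp add: reg_left_Ore_def reg_right_Ore_def)
  qed
qed

lemma (in monoid) Units_cancel1: "x \<in> Units G \<Longrightarrow> y \<in> carrier G \<Longrightarrow> inv x \<otimes> (x \<otimes> y) = y"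
  by (simp add: m_assoc[symmetric] Units_closed)

lemma (in monoid) Units_cancel2: "x \<in> Units G \<Longrightarrow> y \<in> carrier G \<Longrightarrow> x \<otimes> (inv x \<otimes> y) = y"
  by (simp add: m_assoc[symmetric] Units_closed)

lemma reg_Ore_regular: "reg_Ore t A T \<Longrightarrow> u \<in> T \<Longrightarrow> regular A u"
  by (cases t) (auto simp: reg_left_Ore_def reg_right_Ore_def)

lemma reg_Ore_mult_set: "reg_Ore t A T \<Longrightarrow> mult_set A T"
  by (cases t) (auto simp: reg_left_Ore_def reg_right_Ore_def)

lemma S_Ore_regular: "u \<in> S_Ore t A \<Longrightarrow> regular A u"
proof -
  assume "u \<in> S_Ore t A"
  then obtain T where "reg_Ore t A T" "u \<in> T" by (auto simp: S_Ore_def)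
  then show ?thesis by (rule reg_Ore_regular)
qed

lemma regular_carrier: "regular A u \<Longrightarrow> u \<in> carrier A"
  by (simp add: regular_def)

locale qsetup =
  A: ring A + Q: ring Q for A :: "('a, 'm) ring_scheme" and Q :: "('q, 'n) ring_scheme" +
  fixes \<iota> :: "'a \<Rightarrow> 'q" and T0 :: "'a set"
  assumes hom: "\<iota> \<in> ring_hom A Q"
    and nzA: "\<one>\<^bsub>A\<^esub> \<noteq> \<zero>\<^bsub>A\<^esub>"
    and T0reg: "\<And>u. u \<in> T0 \<Longrightarrow> regular A u"
    and T0units: "\<And>u. u \<in> T0 \<Longrightarrow> \<iota> u \<in> Units Q"
    and ker0: "\<And>a. a \<in> carrier A \<Longrightarrow> \<iota> a = \<zero>\<^bsub>Q\<^esub> \<Longrightarrow> a = \<zero>\<^bsub>A\<^esub>"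
begin

sublocale ih: ring_hom_ring A Q \<iota>
  by (rule ring_hom_ringI2[OF A.ring_axioms Q.ring_axioms hom])

lemma inj: "inj_on \<iota> (carrier A)"
proof (rule ih.trivial_ker_imp_inj)
  show "a_kernel A Q \<iota> = {\<zero>\<^bsub>A\<^esub>}" unfolding a_kernel_def'
  proof (intro equalityI subsetI)
    fix x assume "x \<in> {x \<in> carrier A. \<iota> x = \<zero>\<^bsub>Q\<^esub>}"
    then have "x = \<zero>\<^bsub>A\<^esub>" using ker0 by blast
    then show "x \<in> {\<zero>\<^bsub>A\<^esub>}" by simp
  next
    fix x assume "x \<in> {\<zero>\<^bsub>A\<^esub>}"
    then have "x = \<zero>\<^bsub>A\<^esub>" by simp
    then show "x \<in> {x \<in> carrier A. \<iota> x = \<zero>\<^bsub>Q\<^esub>}" by simp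
  qed
qed

lemma inj_eq: "a \<in> carrier A \<Longrightarrow> b \<in> carrier A \<Longrightarrow> \<iota> a = \<iota> b \<Longrightarrow> a = b"
  using inj by (auto dest: inj_onD)

lemma nzQ: "\<one>\<^bsub>Q\<^esub> \<noteq> \<zero>\<^bsub>Q\<^esub>"
proof
  assume "\<one>\<^bsub>Q\<^esub> = \<zero>\<^bsub>Q\<^esub>"
  then have "\<iota> \<one>\<^bsub>A\<^esub> = \<iota> \<zero>\<^bsub>A\<^esub>" by simp
  then have "\<one>\<^bsub>A\<^esub> = \<zero>\<^bsub>A\<^esub>" by (rule inj_eq[OF A.one_closed A.zero_closed])
  with nzA show False by simp
qed

definition T1 where "T1 = {a \<in> carrier A. \<iota> a \<in> Units Q}"

lemma T0_T1: "T0 \<subseteq> T1"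
proof
  fix u assume u: "u \<in> T0"
  show "u \<in> T1" unfolding T1_def using regular_carrier[OF T0reg[OF u]] T0units[OF u] by simp
qed

lemma zero_not_unit: "\<zero>\<^bsub>Q\<^esub> \<notin> Units Q"
proof
  assume "\<zero>\<^bsub>Q\<^esub> \<in> Units Q"
  then obtain y where "y \<in> carrier Q" "\<zero>\<^bsub>Q\<^esub> \<otimes>\<^bsub>Q\<^esub> y = \<one>\<^bsub>Q\<^esub>" unfolding Units_def by auto
  then show False using nzQ by simp
qed

lemma T1_mult_set: "mult_set A T1"
  unfolding mult_set_def T1_def
  using zero_not_unit by (auto intro: Q.Units_m_closed)

lemma T1_regular: "u \<in> T1 \<Longrightarrow> regular A u"
  unfolding regular_def
proof (intro conjI ballI impI)
  assume u: "u \<in> T1"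
  then have uc: "u \<in> carrier A" and uu: "\<iota> u \<in> Units Q" by (auto simp: T1_def)
  show "u \<in> carrier A" by (rule uc)
  fix b assume b: "b \<in> carrier A"
  {
    assume "u \<otimes>\<^bsub>A\<^esub> b = \<zero>\<^bsub>A\<^esub>"
    then have "\<iota> u \<otimes>\<^bsub>Q\<^esub> \<iota> b = \<zero>\<^bsub>Q\<^esub>" using uc b by (metis ih.hom_mult ih.hom_zero)
    then have "inv\<^bsub>Q\<^esub> (\<iota> u) \<otimes>\<^bsub>Q\<^esub> (\<iota> u \<otimes>\<^bsub>Q\<^esub> \<iota> b) = \<zero>\<^bsub>Q\<^esub>" using uu by simp
    then have "\<iota> b = \<zero>\<^bsub>Q\<^esub>" using Q.Units_cancel1[OF uu] b by simp
    then show "b = \<zero>\<^bsub>A\<^esub>" using ker0 b by simp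
  }
  {
    assume "b \<otimes>\<^bsub>A\<^esub> u = \<zero>\<^bsub>A\<^esub>"
    then have "\<iota> b \<otimes>\<^bsub>Q\<^esub> \<iota> u = \<zero>\<^bsub>Q\<^esub>" using uc b by (metis ih.hom_mult ih.hom_zero)
    then have "(\<iota> b \<otimes>\<^bsub>Q\<^esub> \<iota> u) \<otimes>\<^bsub>Q\<^esub> inv\<^bsub>Q\<^esub> (\<iota> u) = \<zero>\<^bsub>Q\<^esub>" using uu by simp
    then have "\<iota> b = \<zero>\<^bsub>Q\<^esub>" using uu b by (simp add: Q.m_assoc Q.Units_closed)
    then show "b = \<zero>\<^bsub>A\<^esub>" using ker0 b by simp
  }
qed

lemma T1_left_Ore:
  assumes rep: "\<And>q. q \<in> carrier Q \<Longrightarrow> \<exists>w\<in>T0. \<exists>c\<in>carrier A. q = inv\<^bsub>Q\<^esub> (\<iota> w) \<otimes>\<^bsub>Q\<^esub> \<iota> c"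
    and b: "b \<in> carrier A" and u: "u \<in> T1"
  shows "\<exists>w\<in>T1. \<exists>c\<in>carrier A. w \<otimes>\<^bsub>A\<^esub> b = c \<otimes>\<^bsub>A\<^esub> u"
proof -
  have uc: "u \<in> carrier A" and uu: "\<iota> u \<in> Units Q" using u by (auto simp: T1_def)
  have "\<iota> b \<otimes>\<^bsub>Q\<^esub> inv\<^bsub>Q\<^esub> (\<iota> u) \<in> carrier Q" using b uu by simp
  then obtain w c where w: "w \<in> T0" and c: "c \<in> carrier A"
    and q: "\<iota> b \<otimes>\<^bsub>Q\<^esub> inv\<^bsub>Q\<^esub> (\<iota> u) = inv\<^bsub>Q\<^esub> (\<iota> w) \<otimes>\<^bsub>Q\<^esub> \<iota> c" using rep by blast
  have wc: "w \<in> carrier A" using regular_carrier[OF T0reg[OF w]] .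
  have wu: "\<iota> w \<in> Units Q" using T0units[OF w] .
  have "\<iota> (w \<otimes>\<^bsub>A\<^esub> b) = \<iota> w \<otimes>\<^bsub>Q\<^esub> ((\<iota> b \<otimes>\<^bsub>Q\<^esub> inv\<^bsub>Q\<^esub> (\<iota> u)) \<otimes>\<^bsub>Q\<^esub> \<iota> u)"
    using wc b uu by (simp add: Q.m_assoc Q.Units_closed)
  also have "\<dots> = \<iota> w \<otimes>\<^bsub>Q\<^esub> ((inv\<^bsub>Q\<^esub> (\<iota> w) \<otimes>\<^bsub>Q\<^esub> \<iota> c) \<otimes>\<^bsub>Q\<^esub> \<iota> u)" by (simp only: q)
  also have "\<dots> = \<iota> (c \<otimes>\<^bsub>A\<^esub> u)"
    using wu c uc by (simp add: Q.m_assoc Q.Units_closed Q.Units_cancel2)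
  finally have "w \<otimes>\<^bsub>A\<^esub> b = c \<otimes>\<^bsub>A\<^esub> u" using inj_eq wc b c uc by simp
  then show ?thesis using w T0_T1 c by blast
qed

lemma T1_right_Ore:
  assumes rep: "\<And>q. q \<in> carrier Q \<Longrightarrow> \<exists>w\<in>T0. \<exists>c\<in>carrier A. q = \<iota> c \<otimes>\<^bsub>Q\<^esub> inv\<^bsub>Q\<^esub> (\<iota> w)"
    and b: "b \<in> carrier A" and u: "u \<in> T1"
  shows "\<exists>w\<in>T1. \<exists>c\<in>carrier A. b \<otimes>\<^bsub>A\<^esub> w = u \<otimes>\<^bsub>A\<^esub> c"
proof -
  have uc: "u \<in> carrier A" and uu: "\<iota> u \<in> Units Q" using u by (auto simp: T1_def)
  have "inv\<^bsub>Q\<^esub> (\<iota> u) \<otimes>\<^bsub>Q\<^esub> \<iota> b \<in> carrier Q" using b uu by simp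
  then obtain w c where w: "w \<in> T0" and c: "c \<in> carrier A"
    and q: "inv\<^bsub>Q\<^esub> (\<iota> u) \<otimes>\<^bsub>Q\<^esub> \<iota> b = \<iota> c \<otimes>\<^bsub>Q\<^esub> inv\<^bsub>Q\<^esub> (\<iota> w)" using rep by blast
  have wc: "w \<in> carrier A" using regular_carrier[OF T0reg[OF w]] .
  have wu: "\<iota> w \<in> Units Q" using T0units[OF w] .
  have "\<iota> (b \<otimes>\<^bsub>A\<^esub> w) = \<iota> u \<otimes>\<^bsub>Q\<^esub> ((inv\<^bsub>Q\<^esub> (\<iota> u) \<otimes>\<^bsub>Q\<^esub> \<iota> b) \<otimes>\<^bsub>Q\<^esub> \<iota> w)"
    using wc b uu by (simp add: Q.m_assoc Q.Units_closed Q.Units_cancel2)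
  also have "\<dots> = \<iota> u \<otimes>\<^bsub>Q\<^esub> ((\<iota> c \<otimes>\<^bsub>Q\<^esub> inv\<^bsub>Q\<^esub> (\<iota> w)) \<otimes>\<^bsub>Q\<^esub> \<iota> w)" by (simp only: q)
  also have "\<dots> = \<iota> (u \<otimes>\<^bsub>A\<^esub> c)"
    using wu c uc by (simp add: Q.m_assoc Q.Units_closed)
  finally have "b \<otimes>\<^bsub>A\<^esub> w = u \<otimes>\<^bsub>A\<^esub> c" using inj_eq wc b c uc by simp
  then show ?thesis using w T0_T1 c by blast
qed

lemma right_rep_from_two:
  assumes T0: "T0 = S_Ore Two A"
    and rep: "\<And>q. q \<in> carrier Q \<Longrightarrow> \<exists>w\<in>T0. \<exists>c\<in>carrier A. q = inv\<^bsub>Q\<^esub> (\<iota> w) \<otimes>\<^bsub>Q\<^esub> \<iota> c"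
    and q: "q \<in> carrier Q"
  shows "\<exists>w\<in>T0. \<exists>c\<in>carrier A. q = \<iota> c \<otimes>\<^bsub>Q\<^esub> inv\<^bsub>Q\<^esub> (\<iota> w)"
proof -
  obtain w c where w: "w \<in> T0" and c: "c \<in> carrier A" and qe: "q = inv\<^bsub>Q\<^esub> (\<iota> w) \<otimes>\<^bsub>Q\<^esub> \<iota> c"
    using rep[OF q] by blast
  obtain T where T: "reg_Ore Two A T" "w \<in> T" using w T0 by (auto simp: S_Ore_def)
  then have "reg_right_Ore A T" by simp
  then obtain w' c' where w': "w' \<in> T" and c': "c' \<in> carrier A" and e: "c \<otimes>\<^bsub>A\<^esub> w' = w \<otimes>\<^bsub>A\<^esub> c'"
    using c T(2) unfolding reg_right_Ore_def by blast
  have w'0: "w' \<in> T0" using T(1) w' T0 by (auto simp: S_Ore_def)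
  have wc: "w \<in> carrier A" using regular_carrier[OF T0reg[OF w]] .
  have wu: "\<iota> w \<in> Units Q" using T0units[OF w] .
  have w'c: "w' \<in> carrier A" using regular_carrier[OF T0reg[OF w'0]] .
  have w'u: "\<iota> w' \<in> Units Q" using T0units[OF w'0] .
  have "\<iota> c' \<otimes>\<^bsub>Q\<^esub> inv\<^bsub>Q\<^esub> (\<iota> w') = inv\<^bsub>Q\<^esub> (\<iota> w) \<otimes>\<^bsub>Q\<^esub> (\<iota> (w \<otimes>\<^bsub>A\<^esub> c') \<otimes>\<^bsub>Q\<^esub> inv\<^bsub>Q\<^esub> (\<iota> w'))"
    using wu w'u c' wc by (simp add: Q.m_assoc Q.Units_closed Q.Units_cancel1)
  also have "\<dots> = inv\<^bsub>Q\<^esub> (\<iota> w) \<otimes>\<^bsub>Q\<^esub> (\<iota> (c \<otimes>\<^bsub>A\<^esub> w') \<otimes>\<^bsub>Q\<^esub> inv\<^bsub>Q\<^esub> (\<iota> w'))"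
    by (simp only: e)
  also have "\<dots> = q" using wu w'u c w'c qe by (simp add: Q.m_assoc Q.Units_closed)
  finally show ?thesis using w'0 c' by metis
qed

lemma T1_eq:
  assumes T0: "T0 = S_Ore t A" and ro: "reg_Ore t A T1"
  shows "T0 = T1" "reg_Ore t A T0"
proof -
  have "T1 \<subseteq> S_Ore t A" using ro by (auto simp: S_Ore_def)
  then show "T0 = T1" using T0_T1 T0 by simp
  then show "reg_Ore t A T0" using ro by simp
qed

end

lemma part_B:
  assumes A: "ring A" and nzA: "\<one>\<^bsub>A\<^esub> \<noteq> \<zero>\<^bsub>A\<^esub>" and Q: "is_Q t A Q \<iota>"
  shows "qsetup A Q \<iota> (S_Ore t A) \<and> S_Ore t A = {a \<in> carrier A. \<iota> a \<in> Units Q} \<and> reg_Ore t A (S_Ore t A)"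
proof -
  let ?T0 = "S_Ore t A"
  have reg: "\<And>u. u \<in> ?T0 \<Longrightarrow> regular A u" by (rule S_Ore_regular)
  have ker_l: "a = \<zero>\<^bsub>A\<^esub>" if "a \<in> carrier A" "\<exists>u\<in>?T0. u \<otimes>\<^bsub>A\<^esub> a = \<zero>\<^bsub>A\<^esub>" for a
    using that reg unfolding regular_def by blast
  have ker_r: "a = \<zero>\<^bsub>A\<^esub>" if "a \<in> carrier A" "\<exists>u\<in>?T0. a \<otimes>\<^bsub>A\<^esub> u = \<zero>\<^bsub>A\<^esub>" for a
    using that reg unfolding regular_def by blast
  show ?thesis
  proof (cases t)
    case Lft
    then have lf: "is_left_fractions A ?T0 Q \<iota>" using Q by simp
    interpret qsetup A Q \<iota> ?T0
      using lf A nzA reg ker_l unfolding is_left_fractions_def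
      by (intro qsetup.intro qsetup_axioms.intro) auto
    have rep: "\<And>q. q \<in> carrier Q \<Longrightarrow> \<exists>w\<in>?T0. \<exists>c\<in>carrier A. q = inv\<^bsub>Q\<^esub> (\<iota> w) \<otimes>\<^bsub>Q\<^esub> \<iota> c"
      using lf unfolding is_left_fractions_def by blast
    have "reg_Ore t A T1" using Lft T1_mult_set T1_regular T1_left_Ore[OF rep]
      by (simp add: reg_left_Ore_def)
    then show ?thesis using T1_eq[of t] qsetup_axioms by (simp add: T1_def)
  next
    case Rgt
    then have rf: "is_right_fractions A ?T0 Q \<iota>" using Q by simp
    interpret qsetup A Q \<iota> ?T0
      using rf A nzA reg ker_r unfolding is_right_fractions_def
      by (intro qsetup.intro qsetup_axioms.intro) auto
    have rep: "\<And>q. q \<in> carrier Q \<Longrightarrow> \<exists>w\<in>?T0. \<exists>c\<in>carrier A. q = \<iota> c \<otimes>\<^bsub>Q\<^esub> inv\<^bsub>Q\<^esub> (\<iota> w)"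
      using rf unfolding is_right_fractions_def by blast
    have "reg_Ore t A T1" using Rgt T1_mult_set T1_regular T1_right_Ore[OF rep]
      by (simp add: reg_right_Ore_def)
    then show ?thesis using T1_eq[of t] qsetup_axioms by (simp add: T1_def)
  next
    case Two
    then have lf: "is_left_fractions A ?T0 Q \<iota>" using Q by simp
    interpret qsetup A Q \<iota> ?T0
      using lf A nzA reg ker_l unfolding is_left_fractions_def
      by (intro qsetup.intro qsetup_axioms.intro) auto
    have rep: "\<And>q. q \<in> carrier Q \<Longrightarrow> \<exists>w\<in>?T0. \<exists>c\<in>carrier A. q = inv\<^bsub>Q\<^esub> (\<iota> w) \<otimes>\<^bsub>Q\<^esub> \<iota> c"
      using lf unfolding is_left_fractions_def by blast
    have rep': "\<And>q. q \<in> carrier Q \<Longrightarrow> \<exists>w\<in>?T0. \<exists>c\<in>carrier A. q = \<iota> c \<otimes>\<^bsub>Q\<^esub> inv\<^bsub>Q\<^esub> (\<iota> w)"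
      using right_rep_from_two[OF _ rep] Two by simp
    have "reg_Ore t A T1" using Two T1_mult_set T1_regular T1_left_Ore[OF rep] T1_right_Ore[OF rep']
      by (simp add: reg_left_Ore_def reg_right_Ore_def)
    then show ?thesis using T1_eq[of t] qsetup_axioms by (simp add: T1_def)
  qed
qed

lemma fr_carrier_mono: "S0 \<subseteq> S1 \<Longrightarrow> fr_carrier A S0 \<subseteq> fr_carrier A S1"
  unfolding fr_carrier_def by blast

lemma loc_rels_mono: "S0 \<subseteq> S1 \<Longrightarrow> loc_rels R S0 \<subseteq> loc_rels R S1"
  unfolding loc_rels_def by blast

lemma loc_ideal_mono:
  assumes R: "ring R" and sub: "S0 \<subseteq> S1" and S1: "S1 \<subseteq> carrier R"
  shows "loc_ideal R S0 \<subseteq> loc_ideal R S1"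
proof -
  interpret l0: locS R S0 using R sub S1 by (simp add: locS_def locS_axioms_def)
  interpret l1: locS R S1 using R S1 by (simp add: locS_def locS_axioms_def)
  interpret I1: ideal "loc_ideal R S1" "free_ring (carrier R) S1" by (rule l1.I_ideal)
  define J where "J = loc_ideal R S1 \<inter> carrier (free_ring (carrier R) S0)"
  have cm: "carrier (free_ring (carrier R) S0) \<subseteq> carrier (free_ring (carrier R) S1)"
    using fr_carrier_mono[OF sub] by (simp add: free_ring_simps)
  have "ideal J (free_ring (carrier R) S0)"
  proof (rule idealI[OF l0.FR_ring])
    show "subgroup J (add_monoid (free_ring (carrier R) S0))"
    proof (rule l0.F.add.subgroupI)
      show "J \<subseteq> carrier (free_ring (carrier R) S0)" unfolding J_def by blast
      have "\<zero>\<^bsub>free_ring (carrier R) S1\<^esub> \<in> loc_ideal R S1" by simp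
      then have "(\<lambda>w. 0) \<in> J" unfolding J_def by (simp add: free_ring_simps zero_closed_fr)
      then show "J \<noteq> {}" by blast
    next
      fix a assume a: "a \<in> J"
      then have a0: "a \<in> fr_carrier (carrier R) S0" and a1: "a \<in> loc_ideal R S1"
        unfolding J_def by (auto simp: free_ring_simps)
      have a1c: "a \<in> fr_carrier (carrier R) S1" using a0 fr_carrier_mono[OF sub] by blast
      have "\<ominus>\<^bsub>free_ring (carrier R) S1\<^esub> a \<in> loc_ideal R S1" using a1 by simp
      then show "\<ominus>\<^bsub>free_ring (carrier R) S0\<^esub> a \<in> J"
        unfolding J_def using fr_a_inv[OF a0] fr_a_inv[OF a1c] neg_closed_fr[OF a0]
        by (simp add: free_ring_simps)
    next
      fix a b assume "a \<in> J" "b \<in> J"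
      then have a0: "a \<in> fr_carrier (carrier R) S0" "b \<in> fr_carrier (carrier R) S0"
        and a1: "a \<in> loc_ideal R S1" "b \<in> loc_ideal R S1"
        unfolding J_def by (auto simp: free_ring_simps)
      have "a \<oplus>\<^bsub>free_ring (carrier R) S1\<^esub> b \<in> loc_ideal R S1" using a1 by simp
      then show "a \<oplus>\<^bsub>free_ring (carrier R) S0\<^esub> b \<in> J"
        unfolding J_def using add_closed_fr[OF a0] by (simp add: free_ring_simps)
    qed
  next
    fix a x assume a: "a \<in> J" and x: "x \<in> carrier (free_ring (carrier R) S0)"
    then have a0: "a \<in> fr_carrier (carrier R) S0" and a1: "a \<in> loc_ideal R S1"
      and x0: "x \<in> fr_carrier (carrier R) S0"
      unfolding J_def by (auto simp: free_ring_simps)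
    have x1: "x \<in> carrier (free_ring (carrier R) S1)" using x cm by blast
    have "x \<otimes>\<^bsub>free_ring (carrier R) S1\<^esub> a \<in> loc_ideal R S1" by (rule I1.I_l_closed[OF a1 x1])
    then show "x \<otimes>\<^bsub>free_ring (carrier R) S0\<^esub> a \<in> J"
      unfolding J_def using conv_closed[OF x0 a0] by (simp add: free_ring_simps)
    have "a \<otimes>\<^bsub>free_ring (carrier R) S1\<^esub> x \<in> loc_ideal R S1" by (rule I1.I_r_closed[OF a1 x1])
    then show "a \<otimes>\<^bsub>free_ring (carrier R) S0\<^esub> x \<in> J"
      unfolding J_def using conv_closed[OF a0 x0] by (simp add: free_ring_simps)
  qed
  moreover have "loc_rels R S0 \<subseteq> J"
    unfolding J_def using loc_rels_mono[OF sub] l1.rels_I l0.rels_sub by blast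
  ultimately have "loc_ideal R S0 \<subseteq> J"
    unfolding loc_ideal_def by (rule l0.F.genideal_minimal)
  then show ?thesis unfolding J_def by blast
qed

context evl
begin

lemma ev_neg:
  assumes "finite (supp f)"
  shows "ev (\<lambda>w. - f w) = \<ominus>\<^bsub>Q\<^esub> ev f"
proof -
  have fs: "finite (supp (\<lambda>w. - f w))" using assms by (simp add: supp_def)
  have "ev (\<lambda>w. - f w) \<oplus>\<^bsub>Q\<^esub> ev f = ev (\<lambda>w. (\<lambda>w. - f w) w + f w)"
    using ev_add[OF fs assms] by simp
  also have "\<dots> = \<zero>\<^bsub>Q\<^esub>" using ev_zero by simp
  finally show ?thesis using Q.minus_equality ev_closed by metis
qed

lemma ev_diff:
  assumes "finite (supp f)" "finite (supp g)"
  shows "ev (\<lambda>w. f w - g w) = ev f \<oplus>\<^bsub>Q\<^esub> \<ominus>\<^bsub>Q\<^esub> ev g"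
proof -
  have fs: "finite (supp (\<lambda>w. - g w))" using assms by (simp add: supp_def)
  have "ev (\<lambda>w. f w - g w) = ev (\<lambda>w. f w + (\<lambda>w. - g w) w)" by simp
  also have "\<dots> = ev f \<oplus>\<^bsub>Q\<^esub> ev (\<lambda>w. - g w)" by (rule ev_add[OF assms(1) fs])
  finally show ?thesis using ev_neg[OF assms(2)] by simp
qed

lemma ev_two: "ev (mon [l, l']) = case_sum el er l \<otimes>\<^bsub>Q\<^esub> case_sum el er l'"
proof -
  have "mon [l, l'] = conv (mon [l]) (mon [l'])" by (simp add: conv_mon)
  then show ?thesis using ev_conv[of "mon [l]" "mon [l']"] ev_letter by (simp add: supp_mon)
qed

lemma ev_nil: "ev (mon []) = \<one>\<^bsub>Q\<^esub>"
proof -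
  have "ev (\<lambda>w. 1 * mon [] w) = \<one>\<^bsub>Q\<^esub>" by (simp only: ev_scale_mon weval_Nil) simp
  then show ?thesis by simp
qed

end

locale mainS =
  fixes R :: "('a, 'm) ring_scheme" and t :: side and aa :: "'a set"
    and Q :: "('q, 'n) ring_scheme" and \<iota> :: "'a set \<Rightarrow> 'q" and S0 :: "'a set"
  assumes R: "ring R" and S0loc: "localizable t R S0" and S0ass: "ass R S0 = aa"
    and isQ: "is_Q t (R Quot aa) Q \<iota>"
begin

definition "A = R Quot aa"
definition "pi = (+>\<^bsub>R\<^esub>) aa"
definition "T0 = S_Ore t A"
definition "Sp = {r \<in> carrier R. pi r \<in> T0}"

lemma S0_basic: "mult_set R S0" "\<one>\<^bsub>loc R S0\<^esub> \<noteq> \<zero>\<^bsub>loc R S0\<^esub>"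
  using localizable_basic[OF S0loc] by auto

sublocale l0: locS R S0
  using R S0_basic(1) by (simp add: locS_def locS_axioms_def mult_set_def)

lemma aa_ideal: "ideal aa R"
  using l0.ass_ideal S0ass by simp

lemma A_ring: "ring A" and pi_hom: "ring_hom_ring R A pi"
  and pz: "\<And>x. x \<in> carrier R \<Longrightarrow> pi x = \<zero>\<^bsub>A\<^esub> \<longleftrightarrow> x \<in> aa"
  and cA: "carrier A = pi ` carrier R"
  using quot_facts[OF R aa_ideal] unfolding A_def pi_def by auto

sublocale Ar: ring A by (rule A_ring)
sublocale ph: ring_hom_ring R A pi by (rule pi_hom)

lemma one_not_aa: "\<one>\<^bsub>R\<^esub> \<notin> aa"
proof
  assume "\<one>\<^bsub>R\<^esub> \<in> aa"
  then have "l0.sig \<one>\<^bsub>R\<^esub> = \<zero>\<^bsub>loc R S0\<^esub>" using S0ass unfolding ass_def by blast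
  then show False using S0_basic(2) by simp
qed

lemma nzA: "\<one>\<^bsub>A\<^esub> \<noteq> \<zero>\<^bsub>A\<^esub>"
proof
  assume "\<one>\<^bsub>A\<^esub> = \<zero>\<^bsub>A\<^esub>"
  then have "pi \<one>\<^bsub>R\<^esub> = \<zero>\<^bsub>A\<^esub>" by simp
  then show False using pz[OF l0.R.one_closed] one_not_aa by simp
qed

lemma partB: "qsetup A Q \<iota> T0 \<and> T0 = {a \<in> carrier A. \<iota> a \<in> Units Q} \<and> reg_Ore t A T0"
  unfolding T0_def by (rule part_B[OF A_ring nzA isQ[folded A_def]])

sublocale qs: qsetup A Q \<iota> T0 using partB by (rule conjunct1)

lemma T0_eq: "T0 = {a \<in> carrier A. \<iota> a \<in> Units Q}" using partB by simp
lemma T0_Ore: "reg_Ore t A T0" using partB by blast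

lemma Sp_sub: "Sp \<subseteq> carrier R" unfolding Sp_def by blast

lemma Sp_iff: "r \<in> Sp \<longleftrightarrow> r \<in> carrier R \<and> \<iota> (pi r) \<in> Units Q"
  unfolding Sp_def T0_eq by auto

lemma Sp_mult: "mult_set R Sp"
  unfolding mult_set_def
proof (intro conjI ballI)
  show "Sp \<subseteq> carrier R" by (rule Sp_sub)
  show "\<one>\<^bsub>R\<^esub> \<in> Sp" unfolding Sp_iff by simp
  show "\<zero>\<^bsub>R\<^esub> \<notin> Sp" unfolding Sp_iff using qs.zero_not_unit by simp
  fix a b assume "a \<in> Sp" "b \<in> Sp"
  then show "a \<otimes>\<^bsub>R\<^esub> b \<in> Sp" unfolding Sp_iff by (simp add: qs.Q.Units_m_closed)
qed

lemma L_ass_sub: "S \<in> L_ass t R aa \<Longrightarrow> S \<subseteq> Sp"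
proof -
  assume "S \<in> L_ass t R aa"
  then have lz: "localizable t R S" and as: "ass R S = aa" by (auto simp: L_ass_def)
  have "reg_Ore t A (pi ` S)" using part_A[OF R lz] unfolding as A_def pi_def .
  then have "pi ` S \<subseteq> T0" unfolding T0_def S_Ore_def by blast
  moreover have "S \<subseteq> carrier R" using localizable_basic[OF lz] by (simp add: mult_set_def)
  ultimately show "S \<subseteq> Sp" unfolding Sp_def by blast
qed

lemma S0_Sp: "S0 \<subseteq> Sp"
  by (rule L_ass_sub) (simp add: L_ass_def S0loc S0ass)

lemma l_loc: "locS R Sp"
  by (rule locS.intro[OF R]) (rule locS_axioms.intro[OF Sp_sub])


sublocale l: locS R Sp by (rule l_loc)

lemma aa_sub: "aa \<subseteq> ass R Sp"
proof
  fix r assume r: "r \<in> aa"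
  have rc: "r \<in> carrier R" using ideal.Icarr[OF aa_ideal r] .
  have "l0.sig r = \<zero>\<^bsub>loc R S0\<^esub>" using r S0ass unfolding ass_def by blast
  then have "mon [Inl r] \<in> loc_ideal R S0"
    using l0.hh_zero_iff[OF l0.monl_closed[OF rc]] by (simp add: l0.sig_def)
  then have "mon [Inl r] \<in> loc_ideal R Sp"
    using loc_ideal_mono[OF R S0_Sp Sp_sub] by blast
  then have "l.sig r = \<zero>\<^bsub>loc R Sp\<^esub>"
    using l.hh_zero_iff[OF l.monl_closed[OF rc]] by (simp add: l.sig_def)
  then show "r \<in> ass R Sp" using rc unfolding ass_def by blast
qed

lemma pi_sig: "a \<in> carrier R \<Longrightarrow> b \<in> carrier R \<Longrightarrow> pi a = pi b \<Longrightarrow> loc_map R Sp a = loc_map R Sp b"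
proof (rule hom_eq_transfer[OF pi_hom locS.sig_hom_ring[OF l_loc]])
  fix x assume "x \<in> carrier R" "pi x = \<zero>\<^bsub>A\<^esub>"
  then have "x \<in> ass R Sp" using pz aa_sub by blast
  then show "loc_map R Sp x = \<zero>\<^bsub>loc R Sp\<^esub>" unfolding ass_def by blast
qed

end

lemma (in abelian_group) add_neg_neg: "x \<in> carrier G \<Longrightarrow> y \<in> carrier G \<Longrightarrow> (x \<oplus> y) \<oplus> \<ominus> x \<oplus> \<ominus> y = \<zero>"
proof -
  assume xy: "x \<in> carrier G" "y \<in> carrier G"
  have "(x \<oplus> y) \<oplus> \<ominus> x \<oplus> \<ominus> y = (x \<oplus> y) \<oplus> (\<ominus> x \<oplus> \<ominus> y)" using xy by (simp add: a_assoc)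
  also have "\<dots> = (x \<oplus> y) \<oplus> \<ominus> (x \<oplus> y)" using xy by (simp add: minus_add)
  also have "\<dots> = \<zero>" using xy by (simp add: r_neg)
  finally show ?thesis .
qed

lemma (in locS) L_carrier: "carrier L = hh ` carrier FR"
  by (auto simp: loc_def FactRing_def A_RCOSETS_def')

context mainS
begin

definition el where "el a = (if a \<in> carrier R then \<iota> (pi a) else \<zero>\<^bsub>Q\<^esub>)"
definition er where "er s = (if s \<in> Sp then inv\<^bsub>Q\<^esub> (\<iota> (pi s)) else \<zero>\<^bsub>Q\<^esub>)"

lemma ipi_closed: "r \<in> carrier R \<Longrightarrow> \<iota> (pi r) \<in> carrier Q"
  using qs.ih.hom_closed ph.hom_closed by simp

lemma ipi_unit: "s \<in> Sp \<Longrightarrow> \<iota> (pi s) \<in> Units Q"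
  using Sp_iff by simp

lemma el_closed: "el a \<in> carrier Q"
  unfolding el_def using ipi_closed by simp

lemma er_closed: "er s \<in> carrier Q"
  unfolding er_def using ipi_unit qs.Q.Units_inv_closed by simp

sublocale e: evl Q el er
  by (rule evl.intro[OF qs.Q.ring_axioms]) (rule evl_axioms.intro[OF el_closed er_closed])

lemma ev_hom: "e.ev \<in> ring_hom l.FR Q" by (rule e.ev_hom)

lemma ev_hom_ring: "ring_hom_ring l.FR Q e.ev"
  by (rule ring_hom_ringI2[OF l.FR_ring qs.Q.ring_axioms ev_hom])

lemma ev_rels: "f \<in> loc_rels R Sp \<Longrightarrow> e.ev f = \<zero>\<^bsub>Q\<^esub>"
proof -
  assume "f \<in> loc_rels R Sp"
  then consider (r1) a b where "a \<in> carrier R" "b \<in> carrier R"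
      "f = (\<lambda>w. mon [Inl (a \<oplus>\<^bsub>R\<^esub> b)] w - mon [Inl a] w - mon [Inl b] w)"
    | (r2) a b where "a \<in> carrier R" "b \<in> carrier R"
      "f = (\<lambda>w. mon [Inl (a \<otimes>\<^bsub>R\<^esub> b)] w - mon [Inl a, Inl b] w)"
    | (r3) "f = (\<lambda>w. mon [Inl \<one>\<^bsub>R\<^esub>] w - mon [] w)"
    | (r4) s where "s \<in> Sp" "f = (\<lambda>w. mon [Inl s, Inr s] w - mon [] w)"
    | (r5) s where "s \<in> Sp" "f = (\<lambda>w. mon [Inr s, Inl s] w - mon [] w)"
    unfolding loc_rels_def by blast
  then show ?thesis
  proof cases
    case r1
    have fs: "finite (supp (\<lambda>w. mon [Inl (a \<oplus>\<^bsub>R\<^esub> b)] w - mon [Inl a] w))"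
      by (rule finite_subset[of _ "{[Inl (a \<oplus>\<^bsub>R\<^esub> b)], [Inl a]}"]) (auto simp: supp_def mon_def)
    have "e.ev f = (el (a \<oplus>\<^bsub>R\<^esub> b) \<oplus>\<^bsub>Q\<^esub> \<ominus>\<^bsub>Q\<^esub> el a) \<oplus>\<^bsub>Q\<^esub> \<ominus>\<^bsub>Q\<^esub> el b"
      unfolding r1(3) using e.ev_diff[OF fs, of "mon [Inl b]"] e.ev_diff[of "mon [Inl (a \<oplus>\<^bsub>R\<^esub> b)]" "mon [Inl a]"]
      by (simp add: supp_mon e.ev_letter)
    also have "\<dots> = \<zero>\<^bsub>Q\<^esub>" using r1 ipi_closed
      by (simp add: el_def qs.Q.add_neg_neg)
    finally show ?thesis .
  next
    case r2
    have "e.ev f = el (a \<otimes>\<^bsub>R\<^esub> b) \<oplus>\<^bsub>Q\<^esub> \<ominus>\<^bsub>Q\<^esub> (el a \<otimes>\<^bsub>Q\<^esub> el b)"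
      unfolding r2(3) using e.ev_diff[of "mon [Inl (a \<otimes>\<^bsub>R\<^esub> b)]" "mon [Inl a, Inl b]"]
      by (simp add: supp_mon e.ev_letter e.ev_two)
    also have "\<dots> = \<zero>\<^bsub>Q\<^esub>" using r2 ipi_closed
      by (simp add: el_def qs.Q.r_neg)
    finally show ?thesis .
  next
    case r3
    have "e.ev f = el \<one>\<^bsub>R\<^esub> \<oplus>\<^bsub>Q\<^esub> \<ominus>\<^bsub>Q\<^esub> \<one>\<^bsub>Q\<^esub>"
      unfolding r3 using e.ev_diff[of "mon [Inl \<one>\<^bsub>R\<^esub>]" "mon []"]
      by (simp add: supp_mon e.ev_letter e.ev_nil)
    also have "\<dots> = \<zero>\<^bsub>Q\<^esub>" by (simp add: el_def qs.Q.r_neg)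
    finally show ?thesis .
  next
    case r4
    have sc: "s \<in> carrier R" using r4 Sp_sub by blast
    have "e.ev f = el s \<otimes>\<^bsub>Q\<^esub> er s \<oplus>\<^bsub>Q\<^esub> \<ominus>\<^bsub>Q\<^esub> \<one>\<^bsub>Q\<^esub>"
      unfolding r4 using e.ev_diff[of "mon [Inl s, Inr s]" "mon []"]
      by (simp add: supp_mon e.ev_two e.ev_nil)
    also have "\<dots> = \<zero>\<^bsub>Q\<^esub>" using r4 sc ipi_unit[OF r4(1)] by (simp add: el_def er_def qs.Q.r_neg)
    finally show ?thesis .
  next
    case r5
    have sc: "s \<in> carrier R" using r5 Sp_sub by blast
    have "e.ev f = er s \<otimes>\<^bsub>Q\<^esub> el s \<oplus>\<^bsub>Q\<^esub> \<ominus>\<^bsub>Q\<^esub> \<one>\<^bsub>Q\<^esub>"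
      unfolding r5 using e.ev_diff[of "mon [Inr s, Inl s]" "mon []"]
      by (simp add: supp_mon e.ev_two e.ev_nil)
    also have "\<dots> = \<zero>\<^bsub>Q\<^esub>" using r5 sc ipi_unit[OF r5(1)] by (simp add: el_def er_def qs.Q.r_neg)
    finally show ?thesis .
  qed
qed

lemma I_ker: "l.I \<subseteq> a_kernel l.FR Q e.ev"
  unfolding loc_ideal_def
proof (rule l.F.genideal_minimal[OF ring_hom_ring.kernel_is_ideal[OF ev_hom_ring]])
  show "loc_rels R Sp \<subseteq> a_kernel l.FR Q e.ev"
    using l.rels_sub ev_rels by (auto simp: a_kernel_def')
qed

lemma ev_I: "f \<in> l.I \<Longrightarrow> e.ev f = \<zero>\<^bsub>Q\<^esub>"
  using I_ker by (auto simp: a_kernel_def')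

definition phi where "phi X = the_elem (e.ev ` X)"

lemma phi_hh:
  assumes f: "f \<in> carrier l.FR"
  shows "phi (l.hh f) = e.ev f"
proof -
  interpret iI: ideal l.I l.FR by (rule l.I_ideal)
  have "e.ev ` (l.hh f) = {e.ev f}"
  proof (intro equalityI subsetI)
    fix y assume "y \<in> e.ev ` (l.hh f)"
    then obtain h where h: "h \<in> l.I" and y: "y = e.ev (h \<oplus>\<^bsub>l.FR\<^esub> f)"
      by (auto simp: a_r_coset_def')
    have hc: "h \<in> carrier l.FR" using iI.Icarr[OF h] .
    have "y = e.ev h \<oplus>\<^bsub>Q\<^esub> e.ev f" using y ring_hom_add[OF ev_hom hc f] by simp
    also have "\<dots> = e.ev f" using ev_I[OF h] e.ev_closed by simp
    finally show "y \<in> {e.ev f}" by simp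
  next
    fix y assume "y \<in> {e.ev f}"
    then have "y = e.ev (\<zero>\<^bsub>l.FR\<^esub> \<oplus>\<^bsub>l.FR\<^esub> f)" using f by simp
    moreover have "\<zero>\<^bsub>l.FR\<^esub> \<oplus>\<^bsub>l.FR\<^esub> f \<in> l.hh f"
      using iI.zero_closed by (auto simp: a_r_coset_def')
    ultimately show "y \<in> e.ev ` (l.hh f)" by blast
  qed
  then show ?thesis unfolding phi_def by simp
qed

lemma phi_hom: "phi \<in> ring_hom l.L Q"
proof (rule ring_hom_memI)
  fix X Y assume X: "X \<in> carrier l.L" and Y: "Y \<in> carrier l.L"
  obtain f where f: "f \<in> carrier l.FR" "X = l.hh f" using X l.L_carrier by auto
  obtain g where g: "g \<in> carrier l.FR" "Y = l.hh g" using Y l.L_carrier by auto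
  show "phi X \<in> carrier Q" using f phi_hh e.ev_closed by simp
  have "X \<otimes>\<^bsub>l.L\<^esub> Y = l.hh (f \<otimes>\<^bsub>l.FR\<^esub> g)" using ring_hom_mult[OF l.hh_hom f(1) g(1)] f g by simp
  then show "phi (X \<otimes>\<^bsub>l.L\<^esub> Y) = phi X \<otimes>\<^bsub>Q\<^esub> phi Y"
    using f g phi_hh ring_hom_mult[OF ev_hom f(1) g(1)] by simp
  have "X \<oplus>\<^bsub>l.L\<^esub> Y = l.hh (f \<oplus>\<^bsub>l.FR\<^esub> g)" using ring_hom_add[OF l.hh_hom f(1) g(1)] f g by simp
  then show "phi (X \<oplus>\<^bsub>l.L\<^esub> Y) = phi X \<oplus>\<^bsub>Q\<^esub> phi Y"
    using f g phi_hh ring_hom_add[OF ev_hom f(1) g(1)] by simp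
next
  have "\<one>\<^bsub>l.L\<^esub> = l.hh \<one>\<^bsub>l.FR\<^esub>" using ring_hom_one[OF l.hh_hom] by simp
  then show "phi \<one>\<^bsub>l.L\<^esub> = \<one>\<^bsub>Q\<^esub>" using phi_hh ring_hom_one[OF ev_hom] by simp
qed

lemma phi_sig: "r \<in> carrier R \<Longrightarrow> phi (l.sig r) = \<iota> (pi r)"
  using phi_hh[OF l.monl_closed] e.ev_letter by (simp add: l.sig_def el_def)

lemma phi_xv: "s \<in> Sp \<Longrightarrow> phi (l.xv s) = inv\<^bsub>Q\<^esub> (\<iota> (pi s))"
  using phi_hh[OF l.monr_closed] e.ev_letter by (simp add: l.xv_def er_def)

end

context mainS
begin

lemma pi_surj: "c \<in> carrier A \<Longrightarrow> \<exists>r\<in>carrier R. c = pi r"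
  using cA by auto

lemma piSp: "s \<in> Sp \<Longrightarrow> pi s \<in> T0" unfolding Sp_def by blast

lemma T0_Sp: "r \<in> carrier R \<Longrightarrow> pi r \<in> T0 \<Longrightarrow> r \<in> Sp" unfolding Sp_def by blast

lemma SpR: "s \<in> Sp \<Longrightarrow> s \<in> carrier R" using Sp_sub by blast

lemma Sp_m: "s \<in> Sp \<Longrightarrow> u \<in> Sp \<Longrightarrow> s \<otimes>\<^bsub>R\<^esub> u \<in> Sp"
  using Sp_mult unfolding mult_set_def by blast

lemma Sp_one: "\<one>\<^bsub>R\<^esub> \<in> Sp"
  using Sp_mult unfolding mult_set_def by blast

lemma ore_left:
  assumes lo: "reg_left_Ore A T0" and x: "x \<in> carrier R" and s: "s \<in> Sp"
  shows "\<exists>s'\<in>Sp. \<exists>r'\<in>carrier R. l.sig x \<otimes>\<^bsub>l.L\<^esub> l.xv s = l.xv s' \<otimes>\<^bsub>l.L\<^esub> l.sig r'"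
proof -
  have "pi x \<in> carrier A" using x by simp
  then obtain u' a' where u': "u' \<in> T0" and a': "a' \<in> carrier A"
    and e: "u' \<otimes>\<^bsub>A\<^esub> pi x = a' \<otimes>\<^bsub>A\<^esub> pi s"
    using lo piSp[OF s] unfolding reg_left_Ore_def by blast
  obtain s' where s'R: "s' \<in> carrier R" and s'e: "u' = pi s'"
    using pi_surj[OF regular_carrier[OF qs.T0reg[OF u']]] by blast
  obtain r' where r': "r' \<in> carrier R" and r'e: "a' = pi r'" using pi_surj a' by blast
  have s': "s' \<in> Sp" using T0_Sp s'R u' s'e by simp
  have "pi (s' \<otimes>\<^bsub>R\<^esub> x) = pi (r' \<otimes>\<^bsub>R\<^esub> s)" using e s'e r'e s'R x r' SpR[OF s] by simp
  then have "l.sig (s' \<otimes>\<^bsub>R\<^esub> x) = l.sig (r' \<otimes>\<^bsub>R\<^esub> s)"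
    by (rule pi_sig[OF l0.R.m_closed[OF s'R x] l0.R.m_closed[OF r' SpR[OF s]]])
  then have "l.sig x \<otimes>\<^bsub>l.L\<^esub> l.xv s = l.xv s' \<otimes>\<^bsub>l.L\<^esub> l.sig r'"
    by (rule l.rel_to_ore_left[OF s s' x r'])
  then show ?thesis using s' r' by blast
qed

lemma ore_right:
  assumes ro: "reg_right_Ore A T0" and x: "x \<in> carrier R" and s: "s \<in> Sp"
  shows "\<exists>s'\<in>Sp. \<exists>r'\<in>carrier R. l.xv s \<otimes>\<^bsub>l.L\<^esub> l.sig x = l.sig r' \<otimes>\<^bsub>l.L\<^esub> l.xv s'"
proof -
  have "pi x \<in> carrier A" using x by simp
  then obtain u' a' where u': "u' \<in> T0" and a': "a' \<in> carrier A"
    and e: "pi x \<otimes>\<^bsub>A\<^esub> u' = pi s \<otimes>\<^bsub>A\<^esub> a'"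
    using ro piSp[OF s] unfolding reg_right_Ore_def by blast
  obtain s' where s'R: "s' \<in> carrier R" and s'e: "u' = pi s'"
    using pi_surj[OF regular_carrier[OF qs.T0reg[OF u']]] by blast
  obtain r' where r': "r' \<in> carrier R" and r'e: "a' = pi r'" using pi_surj a' by blast
  have s': "s' \<in> Sp" using T0_Sp s'R u' s'e by simp
  have "pi (x \<otimes>\<^bsub>R\<^esub> s') = pi (s \<otimes>\<^bsub>R\<^esub> r')" using e s'e r'e s'R x r' SpR[OF s] by simp
  then have "l.sig (x \<otimes>\<^bsub>R\<^esub> s') = l.sig (s \<otimes>\<^bsub>R\<^esub> r')"
    by (rule pi_sig[OF l0.R.m_closed[OF x s'R] l0.R.m_closed[OF SpR[OF s] r']])
  then have "l.xv s \<otimes>\<^bsub>l.L\<^esub> l.sig x = l.sig r' \<otimes>\<^bsub>l.L\<^esub> l.xv s'"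
    by (rule l.rel_to_ore_right[OF s s' x r'])
  then show ?thesis using s' r' by blast
qed

definition Mlft where "Mlft = {l.xv s \<otimes>\<^bsub>l.L\<^esub> l.sig r | s r. s \<in> Sp \<and> r \<in> carrier R}"
definition Mrgt where "Mrgt = {l.sig r \<otimes>\<^bsub>l.L\<^esub> l.xv s | s r. s \<in> Sp \<and> r \<in> carrier R}"

lemmas cl = l.xv_closed l.sh.hom_closed l.sigS_closed SpR

lemma Mlft_all:
  assumes lo: "reg_left_Ore A T0"
  shows "carrier l.L \<subseteq> Mlft"
proof (rule l.loc_gen)
  show "Mlft \<subseteq> carrier l.L" unfolding Mlft_def using cl by auto
next
  fix r assume r: "r \<in> carrier R"
  have "l.sig r = l.xv \<one>\<^bsub>R\<^esub> \<otimes>\<^bsub>l.L\<^esub> l.sig r" using l.xv_one[OF Sp_one] r by simp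
  then show "l.sig r \<in> Mlft" unfolding Mlft_def using Sp_one r by blast
next
  fix s assume s: "s \<in> Sp"
  have "l.xv s = l.xv s \<otimes>\<^bsub>l.L\<^esub> l.sig \<one>\<^bsub>R\<^esub>" using s cl by simp
  then show "l.xv s \<in> Mlft" unfolding Mlft_def using s by blast
next
  fix X Y assume "X \<in> Mlft" "Y \<in> Mlft"
  then obtain s a u b where s: "s \<in> Sp" and a: "a \<in> carrier R" and X: "X = l.xv s \<otimes>\<^bsub>l.L\<^esub> l.sig a"
    and u: "u \<in> Sp" and b: "b \<in> carrier R" and Y: "Y = l.xv u \<otimes>\<^bsub>l.L\<^esub> l.sig b"
    unfolding Mlft_def by blast
  obtain u' a' where u': "u' \<in> Sp" and a': "a' \<in> carrier R"
    and e: "l.sig a \<otimes>\<^bsub>l.L\<^esub> l.xv u = l.xv u' \<otimes>\<^bsub>l.L\<^esub> l.sig a'"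
    using ore_left[OF lo a u] by blast
  have "X \<otimes>\<^bsub>l.L\<^esub> Y = l.xv s \<otimes>\<^bsub>l.L\<^esub> ((l.sig a \<otimes>\<^bsub>l.L\<^esub> l.xv u) \<otimes>\<^bsub>l.L\<^esub> l.sig b)"
    using X Y s a u b cl by (simp add: l.Lr.m_assoc)
  also have "\<dots> = l.xv s \<otimes>\<^bsub>l.L\<^esub> ((l.xv u' \<otimes>\<^bsub>l.L\<^esub> l.sig a') \<otimes>\<^bsub>l.L\<^esub> l.sig b)" by (simp only: e)
  also have "\<dots> = (l.xv s \<otimes>\<^bsub>l.L\<^esub> l.xv u') \<otimes>\<^bsub>l.L\<^esub> l.sig (a' \<otimes>\<^bsub>R\<^esub> b)"
    using s u' a' b cl by (simp add: l.Lr.m_assoc)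
  also have "\<dots> = l.xv (u' \<otimes>\<^bsub>R\<^esub> s) \<otimes>\<^bsub>l.L\<^esub> l.sig (a' \<otimes>\<^bsub>R\<^esub> b)"
    using l.xv_mult[OF s u' Sp_m[OF u' s]] by simp
  finally show "X \<otimes>\<^bsub>l.L\<^esub> Y \<in> Mlft" unfolding Mlft_def using Sp_m[OF u' s] a' b by blast
  obtain s' r' where s': "s' \<in> Sp" and r': "r' \<in> carrier R"
    and e2: "l.sig u \<otimes>\<^bsub>l.L\<^esub> l.xv s = l.xv s' \<otimes>\<^bsub>l.L\<^esub> l.sig r'"
    using ore_left[OF lo SpR[OF u] s] by blast
  have v: "s' \<otimes>\<^bsub>R\<^esub> u \<in> Sp" using Sp_m[OF s' u] .
  have "Y = l.xv u \<otimes>\<^bsub>l.L\<^esub> (l.xv s' \<otimes>\<^bsub>l.L\<^esub> (l.sig s' \<otimes>\<^bsub>l.L\<^esub> l.sig b))"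
    using Y l.xv_sig_assoc[OF s'] u s' b cl by simp
  also have "\<dots> = (l.xv u \<otimes>\<^bsub>l.L\<^esub> l.xv s') \<otimes>\<^bsub>l.L\<^esub> l.sig (s' \<otimes>\<^bsub>R\<^esub> b)"
    using u s' b cl by (simp add: l.Lr.m_assoc)
  also have "\<dots> = l.xv (s' \<otimes>\<^bsub>R\<^esub> u) \<otimes>\<^bsub>l.L\<^esub> l.sig (s' \<otimes>\<^bsub>R\<^esub> b)"
    using l.xv_mult[OF u s' v] by simp
  finally have Y': "Y = l.xv (s' \<otimes>\<^bsub>R\<^esub> u) \<otimes>\<^bsub>l.L\<^esub> l.sig (s' \<otimes>\<^bsub>R\<^esub> b)" .
  have "X = l.xv u \<otimes>\<^bsub>l.L\<^esub> (l.sig u \<otimes>\<^bsub>l.L\<^esub> (l.xv s \<otimes>\<^bsub>l.L\<^esub> l.sig a))"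
    using X l.xv_sig_assoc[OF u] s a cl by simp
  also have "\<dots> = l.xv u \<otimes>\<^bsub>l.L\<^esub> ((l.sig u \<otimes>\<^bsub>l.L\<^esub> l.xv s) \<otimes>\<^bsub>l.L\<^esub> l.sig a)"
    using u s a cl by (simp add: l.Lr.m_assoc)
  also have "\<dots> = l.xv u \<otimes>\<^bsub>l.L\<^esub> ((l.xv s' \<otimes>\<^bsub>l.L\<^esub> l.sig r') \<otimes>\<^bsub>l.L\<^esub> l.sig a)" by (simp only: e2)
  also have "\<dots> = (l.xv u \<otimes>\<^bsub>l.L\<^esub> l.xv s') \<otimes>\<^bsub>l.L\<^esub> l.sig (r' \<otimes>\<^bsub>R\<^esub> a)"
    using u s' r' a cl by (simp add: l.Lr.m_assoc)
  also have "\<dots> = l.xv (s' \<otimes>\<^bsub>R\<^esub> u) \<otimes>\<^bsub>l.L\<^esub> l.sig (r' \<otimes>\<^bsub>R\<^esub> a)"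
    using l.xv_mult[OF u s' v] by simp
  finally have X': "X = l.xv (s' \<otimes>\<^bsub>R\<^esub> u) \<otimes>\<^bsub>l.L\<^esub> l.sig (r' \<otimes>\<^bsub>R\<^esub> a)" .
  have "X \<oplus>\<^bsub>l.L\<^esub> Y = l.xv (s' \<otimes>\<^bsub>R\<^esub> u) \<otimes>\<^bsub>l.L\<^esub> l.sig ((r' \<otimes>\<^bsub>R\<^esub> a) \<oplus>\<^bsub>R\<^esub> (s' \<otimes>\<^bsub>R\<^esub> b))"
    unfolding X' Y' using v r' a s' b cl by (simp add: l.Lr.r_distr)
  then show "X \<oplus>\<^bsub>l.L\<^esub> Y \<in> Mlft" unfolding Mlft_def using v r' a s' b SpR by blast
qed

lemma Mrgt_all:
  assumes ro: "reg_right_Ore A T0"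
  shows "carrier l.L \<subseteq> Mrgt"
proof (rule l.loc_gen)
  show "Mrgt \<subseteq> carrier l.L" unfolding Mrgt_def using cl by auto
next
  fix r assume r: "r \<in> carrier R"
  have "l.sig r = l.sig r \<otimes>\<^bsub>l.L\<^esub> l.xv \<one>\<^bsub>R\<^esub>" using l.xv_one[OF Sp_one] r by simp
  then show "l.sig r \<in> Mrgt" unfolding Mrgt_def using Sp_one r by blast
next
  fix s assume s: "s \<in> Sp"
  have "l.xv s = l.sig \<one>\<^bsub>R\<^esub> \<otimes>\<^bsub>l.L\<^esub> l.xv s" using s cl by simp
  then show "l.xv s \<in> Mrgt" unfolding Mrgt_def using s by blast
next
  fix X Y assume "X \<in> Mrgt" "Y \<in> Mrgt"
  then obtain s a u b where s: "s \<in> Sp" and a: "a \<in> carrier R" and X: "X = l.sig a \<otimes>\<^bsub>l.L\<^esub> l.xv s"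
    and u: "u \<in> Sp" and b: "b \<in> carrier R" and Y: "Y = l.sig b \<otimes>\<^bsub>l.L\<^esub> l.xv u"
    unfolding Mrgt_def by blast
  obtain s' b' where s': "s' \<in> Sp" and b': "b' \<in> carrier R"
    and e: "l.xv s \<otimes>\<^bsub>l.L\<^esub> l.sig b = l.sig b' \<otimes>\<^bsub>l.L\<^esub> l.xv s'"
    using ore_right[OF ro b s] by blast
  have "X \<otimes>\<^bsub>l.L\<^esub> Y = l.sig a \<otimes>\<^bsub>l.L\<^esub> ((l.xv s \<otimes>\<^bsub>l.L\<^esub> l.sig b) \<otimes>\<^bsub>l.L\<^esub> l.xv u)"
    using X Y s a u b cl by (simp add: l.Lr.m_assoc)
  also have "\<dots> = l.sig a \<otimes>\<^bsub>l.L\<^esub> ((l.sig b' \<otimes>\<^bsub>l.L\<^esub> l.xv s') \<otimes>\<^bsub>l.L\<^esub> l.xv u)" by (simp only: e)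
  also have "\<dots> = l.sig (a \<otimes>\<^bsub>R\<^esub> b') \<otimes>\<^bsub>l.L\<^esub> (l.xv s' \<otimes>\<^bsub>l.L\<^esub> l.xv u)"
    using s' u a b' cl by (simp add: l.Lr.m_assoc)
  also have "\<dots> = l.sig (a \<otimes>\<^bsub>R\<^esub> b') \<otimes>\<^bsub>l.L\<^esub> l.xv (u \<otimes>\<^bsub>R\<^esub> s')"
    using l.xv_mult[OF s' u Sp_m[OF u s']] by simp
  finally show "X \<otimes>\<^bsub>l.L\<^esub> Y \<in> Mrgt" unfolding Mrgt_def using Sp_m[OF u s'] a b' by blast
  obtain s'' r' where s'': "s'' \<in> Sp" and r': "r' \<in> carrier R"
    and e2: "l.xv s \<otimes>\<^bsub>l.L\<^esub> l.sig u = l.sig r' \<otimes>\<^bsub>l.L\<^esub> l.xv s''"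
    using ore_right[OF ro SpR[OF u] s] by blast
  have v: "u \<otimes>\<^bsub>R\<^esub> s'' \<in> Sp" using Sp_m[OF u s''] .
  have "Y = ((l.sig b \<otimes>\<^bsub>l.L\<^esub> l.sig s'') \<otimes>\<^bsub>l.L\<^esub> l.xv s'') \<otimes>\<^bsub>l.L\<^esub> l.xv u"
    using Y u s'' b cl l.sig_xv[OF s''] by (simp add: l.Lr.m_assoc)
  also have "\<dots> = l.sig (b \<otimes>\<^bsub>R\<^esub> s'') \<otimes>\<^bsub>l.L\<^esub> (l.xv s'' \<otimes>\<^bsub>l.L\<^esub> l.xv u)"
    using u s'' b cl by (simp add: l.Lr.m_assoc)
  also have "\<dots> = l.sig (b \<otimes>\<^bsub>R\<^esub> s'') \<otimes>\<^bsub>l.L\<^esub> l.xv (u \<otimes>\<^bsub>R\<^esub> s'')"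
    using l.xv_mult[OF s'' u v] by simp
  finally have Y': "Y = l.sig (b \<otimes>\<^bsub>R\<^esub> s'') \<otimes>\<^bsub>l.L\<^esub> l.xv (u \<otimes>\<^bsub>R\<^esub> s'')" .
  have "X = l.sig a \<otimes>\<^bsub>l.L\<^esub> ((l.xv s \<otimes>\<^bsub>l.L\<^esub> l.sig u) \<otimes>\<^bsub>l.L\<^esub> l.xv u)"
    using X u s a cl l.sig_xv[OF u] by (simp add: l.Lr.m_assoc)
  also have "\<dots> = l.sig a \<otimes>\<^bsub>l.L\<^esub> ((l.sig r' \<otimes>\<^bsub>l.L\<^esub> l.xv s'') \<otimes>\<^bsub>l.L\<^esub> l.xv u)" by (simp only: e2)
  also have "\<dots> = l.sig (a \<otimes>\<^bsub>R\<^esub> r') \<otimes>\<^bsub>l.L\<^esub> (l.xv s'' \<otimes>\<^bsub>l.L\<^esub> l.xv u)"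
    using u s'' r' a cl by (simp add: l.Lr.m_assoc)
  also have "\<dots> = l.sig (a \<otimes>\<^bsub>R\<^esub> r') \<otimes>\<^bsub>l.L\<^esub> l.xv (u \<otimes>\<^bsub>R\<^esub> s'')"
    using l.xv_mult[OF s'' u v] by simp
  finally have X': "X = l.sig (a \<otimes>\<^bsub>R\<^esub> r') \<otimes>\<^bsub>l.L\<^esub> l.xv (u \<otimes>\<^bsub>R\<^esub> s'')" .
  have "X \<oplus>\<^bsub>l.L\<^esub> Y = l.sig ((a \<otimes>\<^bsub>R\<^esub> r') \<oplus>\<^bsub>R\<^esub> (b \<otimes>\<^bsub>R\<^esub> s'')) \<otimes>\<^bsub>l.L\<^esub> l.xv (u \<otimes>\<^bsub>R\<^esub> s'')"
    unfolding X' Y' using v r' a s'' b cl by (simp add: l.Lr.l_distr)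
  then show "X \<oplus>\<^bsub>l.L\<^esub> Y \<in> Mrgt" unfolding Mrgt_def using v r' a s'' b SpR by blast
qed

end

lemma iso_units:
  assumes L: "ring L" and Q: "ring Q" and phi: "\<phi> \<in> ring_iso L Q" and x: "x \<in> carrier L"
  shows "x \<in> Units L \<longleftrightarrow> \<phi> x \<in> Units Q"
proof -
  interpret L: ring L by (rule L)
  interpret Q: ring Q by (rule Q)
  have hom: "\<phi> \<in> ring_hom L Q" using phi by (simp add: ring_iso_def)
  have bij: "bij_betw \<phi> (carrier L) (carrier Q)" using phi by (simp add: ring_iso_def)
  show ?thesis
  proof
    assume "x \<in> Units L"
    then obtain y where y: "y \<in> carrier L" "y \<otimes>\<^bsub>L\<^esub> x = \<one>\<^bsub>L\<^esub>" "x \<otimes>\<^bsub>L\<^esub> y = \<one>\<^bsub>L\<^esub>"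
      unfolding Units_def by blast
    have "\<phi> y \<otimes>\<^bsub>Q\<^esub> \<phi> x = \<one>\<^bsub>Q\<^esub>" using ring_hom_mult[OF hom y(1) x] y(2) ring_hom_one[OF hom] by simp
    moreover have "\<phi> x \<otimes>\<^bsub>Q\<^esub> \<phi> y = \<one>\<^bsub>Q\<^esub>" using ring_hom_mult[OF hom x y(1)] y(3) ring_hom_one[OF hom] by simp
    moreover have "\<phi> y \<in> carrier Q" "\<phi> x \<in> carrier Q" using ring_hom_closed[OF hom] y x by auto
    ultimately show "\<phi> x \<in> Units Q" unfolding Units_def by blast
  next
    assume "\<phi> x \<in> Units Q"
    then obtain q where q: "q \<in> carrier Q" "q \<otimes>\<^bsub>Q\<^esub> \<phi> x = \<one>\<^bsub>Q\<^esub>" "\<phi> x \<otimes>\<^bsub>Q\<^esub> q = \<one>\<^bsub>Q\<^esub>"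
      unfolding Units_def by blast
    obtain y where y: "y \<in> carrier L" "q = \<phi> y" using bij q(1) unfolding bij_betw_def by auto
    have inj: "inj_on \<phi> (carrier L)" using bij by (simp add: bij_betw_def)
    have "\<phi> (y \<otimes>\<^bsub>L\<^esub> x) = \<phi> \<one>\<^bsub>L\<^esub>" using ring_hom_mult[OF hom y(1) x] q(2) y(2) ring_hom_one[OF hom] by simp
    then have 1: "y \<otimes>\<^bsub>L\<^esub> x = \<one>\<^bsub>L\<^esub>" using inj y(1) x by (auto dest: inj_onD)
    have "\<phi> (x \<otimes>\<^bsub>L\<^esub> y) = \<phi> \<one>\<^bsub>L\<^esub>" using ring_hom_mult[OF hom x y(1)] q(3) y(2) ring_hom_one[OF hom] by simp
    then have 2: "x \<otimes>\<^bsub>L\<^esub> y = \<one>\<^bsub>L\<^esub>" using inj y(1) x by (auto dest: inj_onD)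
    show "x \<in> Units L" unfolding Units_def using 1 2 x y(1) by blast
  qed
qed

context mainS
begin

lemma phi_hr: "ring_hom_ring l.L Q phi"
  by (rule ring_hom_ringI2[OF l.L_ring qs.Q.ring_axioms phi_hom])

lemma phi_sig_xv: "s \<in> Sp \<Longrightarrow> r \<in> carrier R \<Longrightarrow>
    phi (l.xv s \<otimes>\<^bsub>l.L\<^esub> l.sig r) = inv\<^bsub>Q\<^esub> (\<iota> (pi s)) \<otimes>\<^bsub>Q\<^esub> \<iota> (pi r)"
  using ring_hom_mult[OF phi_hom l.xv_closed l.sh.hom_closed] phi_sig phi_xv by simp

lemma phi_sig_xv': "s \<in> Sp \<Longrightarrow> r \<in> carrier R \<Longrightarrow>
    phi (l.sig r \<otimes>\<^bsub>l.L\<^esub> l.xv s) = \<iota> (pi r) \<otimes>\<^bsub>Q\<^esub> inv\<^bsub>Q\<^esub> (\<iota> (pi s))"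
  using ring_hom_mult[OF phi_hom l.sh.hom_closed l.xv_closed] phi_sig phi_xv by simp

lemma rep_any: "X \<in> carrier l.L \<Longrightarrow>
   (\<exists>s\<in>Sp. \<exists>r\<in>carrier R. X = l.xv s \<otimes>\<^bsub>l.L\<^esub> l.sig r) \<or> (\<exists>s\<in>Sp. \<exists>r\<in>carrier R. X = l.sig r \<otimes>\<^bsub>l.L\<^esub> l.xv s)"
proof -
  assume X: "X \<in> carrier l.L"
  show ?thesis
  proof (cases t)
    case Lft
    then have "reg_left_Ore A T0" using T0_Ore by simp
    then have "X \<in> Mlft" using Mlft_all X by blast
    then show ?thesis unfolding Mlft_def by blast
  next
    case Rgt
    then have "reg_right_Ore A T0" using T0_Ore by simp
    then have "X \<in> Mrgt" using Mrgt_all X by blast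
    then show ?thesis unfolding Mrgt_def by blast
  next
    case Two
    then have "reg_left_Ore A T0" using T0_Ore by simp
    then have "X \<in> Mlft" using Mlft_all X by blast
    then show ?thesis unfolding Mlft_def by blast
  qed
qed

lemma sig_aa: "r \<in> carrier R \<Longrightarrow> \<iota> (pi r) = \<zero>\<^bsub>Q\<^esub> \<Longrightarrow> r \<in> aa \<and> l.sig r = \<zero>\<^bsub>l.L\<^esub>"
proof -
  assume r: "r \<in> carrier R" and z: "\<iota> (pi r) = \<zero>\<^bsub>Q\<^esub>"
  have "pi r = \<zero>\<^bsub>A\<^esub>" using qs.ker0[OF ph.hom_closed[OF r] z] .
  then have ra: "r \<in> aa" using pz[OF r] by simp
  then have "r \<in> ass R Sp" using aa_sub by blast
  then show ?thesis using ra unfolding ass_def by blast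
qed

lemma phi_ker: "X \<in> carrier l.L \<Longrightarrow> phi X = \<zero>\<^bsub>Q\<^esub> \<Longrightarrow> X = \<zero>\<^bsub>l.L\<^esub>"
proof -
  assume X: "X \<in> carrier l.L" and z: "phi X = \<zero>\<^bsub>Q\<^esub>"
  from rep_any[OF X] show ?thesis
  proof
    assume "\<exists>s\<in>Sp. \<exists>r\<in>carrier R. X = l.xv s \<otimes>\<^bsub>l.L\<^esub> l.sig r"
    then obtain s r where s: "s \<in> Sp" and r: "r \<in> carrier R" and Xe: "X = l.xv s \<otimes>\<^bsub>l.L\<^esub> l.sig r" by blast
    have u: "\<iota> (pi s) \<in> Units Q" using ipi_unit[OF s] .
    have "inv\<^bsub>Q\<^esub> (\<iota> (pi s)) \<otimes>\<^bsub>Q\<^esub> \<iota> (pi r) = \<zero>\<^bsub>Q\<^esub>" using z Xe phi_sig_xv[OF s r] by simp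
    then have "\<iota> (pi s) \<otimes>\<^bsub>Q\<^esub> (inv\<^bsub>Q\<^esub> (\<iota> (pi s)) \<otimes>\<^bsub>Q\<^esub> \<iota> (pi r)) = \<zero>\<^bsub>Q\<^esub>"
      using u qs.Q.Units_closed[OF u] by simp
    then have "\<iota> (pi r) = \<zero>\<^bsub>Q\<^esub>" using qs.Q.Units_cancel2[OF u ipi_closed[OF r]] by simp
    then have "l.sig r = \<zero>\<^bsub>l.L\<^esub>" using sig_aa[OF r] by blast
    then show ?thesis using Xe l.xv_closed[OF s] by simp
  next
    assume "\<exists>s\<in>Sp. \<exists>r\<in>carrier R. X = l.sig r \<otimes>\<^bsub>l.L\<^esub> l.xv s"
    then obtain s r where s: "s \<in> Sp" and r: "r \<in> carrier R" and Xe: "X = l.sig r \<otimes>\<^bsub>l.L\<^esub> l.xv s" by blast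
    have u: "\<iota> (pi s) \<in> Units Q" using ipi_unit[OF s] .
    have "\<iota> (pi r) \<otimes>\<^bsub>Q\<^esub> inv\<^bsub>Q\<^esub> (\<iota> (pi s)) = \<zero>\<^bsub>Q\<^esub>" using z Xe phi_sig_xv'[OF s r] by simp
    then have "(\<iota> (pi r) \<otimes>\<^bsub>Q\<^esub> inv\<^bsub>Q\<^esub> (\<iota> (pi s))) \<otimes>\<^bsub>Q\<^esub> \<iota> (pi s) = \<zero>\<^bsub>Q\<^esub>"
      using u qs.Q.Units_closed[OF u] by simp
    then have "\<iota> (pi r) = \<zero>\<^bsub>Q\<^esub>" using u ipi_closed[OF r] by (simp add: qs.Q.m_assoc qs.Q.Units_closed)
    then have "l.sig r = \<zero>\<^bsub>l.L\<^esub>" using sig_aa[OF r] by blast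
    then show ?thesis using Xe l.xv_closed[OF s] by simp
  qed
qed

lemma phi_inj: "inj_on phi (carrier l.L)"
proof (rule ring_hom_ring.trivial_ker_imp_inj[OF phi_hr])
  show "a_kernel l.L Q phi = {\<zero>\<^bsub>l.L\<^esub>}" unfolding a_kernel_def'
  proof (intro equalityI subsetI)
    fix x assume "x \<in> {x \<in> carrier l.L. phi x = \<zero>\<^bsub>Q\<^esub>}"
    then have "x = \<zero>\<^bsub>l.L\<^esub>" using phi_ker by blast
    then show "x \<in> {\<zero>\<^bsub>l.L\<^esub>}" by simp
  next
    fix x assume "x \<in> {\<zero>\<^bsub>l.L\<^esub>}"
    then have "x = \<zero>\<^bsub>l.L\<^esub>" by simp
    then show "x \<in> {x \<in> carrier l.L. phi x = \<zero>\<^bsub>Q\<^esub>}"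
      using ring_hom_zero[OF phi_hom l.L_ring qs.Q.ring_axioms] by simp
  qed
qed

lemma T0_pi: "w \<in> T0 \<Longrightarrow> \<exists>s\<in>Sp. w = pi s"
proof -
  assume w: "w \<in> T0"
  obtain s where s: "s \<in> carrier R" "w = pi s" using pi_surj[OF regular_carrier[OF qs.T0reg[OF w]]] by blast
  then have "s \<in> Sp" using T0_Sp w by simp
  then show ?thesis using s by blast
qed

lemma phi_surj: "phi ` carrier l.L = carrier Q"
proof (intro equalityI subsetI)
  fix y assume "y \<in> phi ` carrier l.L"
  then show "y \<in> carrier Q" using ring_hom_closed[OF phi_hom] by blast
next
  fix q assume q: "q \<in> carrier Q"
  have isQ': "is_Q t A Q \<iota>" using isQ unfolding A_def .
  have "(\<exists>w\<in>T0. \<exists>c\<in>carrier A. q = inv\<^bsub>Q\<^esub> (\<iota> w) \<otimes>\<^bsub>Q\<^esub> \<iota> c) \<or> (\<exists>w\<in>T0. \<exists>c\<in>carrier A. q = \<iota> c \<otimes>\<^bsub>Q\<^esub> inv\<^bsub>Q\<^esub> (\<iota> w))"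
  proof (cases t)
    case Lft
    then have "is_left_fractions A T0 Q \<iota>" using isQ' unfolding T0_def by simp
    then have "\<exists>w\<in>T0. \<exists>c\<in>carrier A. q = inv\<^bsub>Q\<^esub> (\<iota> w) \<otimes>\<^bsub>Q\<^esub> \<iota> c"
      using q unfolding is_left_fractions_def by blast
    then show ?thesis by blast
  next
    case Rgt
    then have "is_right_fractions A T0 Q \<iota>" using isQ' unfolding T0_def by simp
    then have "\<exists>w\<in>T0. \<exists>c\<in>carrier A. q = \<iota> c \<otimes>\<^bsub>Q\<^esub> inv\<^bsub>Q\<^esub> (\<iota> w)"
      using q unfolding is_right_fractions_def by blast
    then show ?thesis by blast
  next
    case Two
    then have "is_left_fractions A T0 Q \<iota>" using isQ' unfolding T0_def by simp
    then have "\<exists>w\<in>T0. \<exists>c\<in>carrier A. q = inv\<^bsub>Q\<^esub> (\<iota> w) \<otimes>\<^bsub>Q\<^esub> \<iota> c"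
      using q unfolding is_left_fractions_def by blast
    then show ?thesis by blast
  qed
  then show "q \<in> phi ` carrier l.L"
  proof
    assume "\<exists>w\<in>T0. \<exists>c\<in>carrier A. q = inv\<^bsub>Q\<^esub> (\<iota> w) \<otimes>\<^bsub>Q\<^esub> \<iota> c"
    then obtain w c where w: "w \<in> T0" and c: "c \<in> carrier A" and qe: "q = inv\<^bsub>Q\<^esub> (\<iota> w) \<otimes>\<^bsub>Q\<^esub> \<iota> c" by blast
    obtain s where s: "s \<in> Sp" "w = pi s" using T0_pi[OF w] by blast
    obtain r where r: "r \<in> carrier R" "c = pi r" using pi_surj[OF c] by blast
    have "q = phi (l.xv s \<otimes>\<^bsub>l.L\<^esub> l.sig r)" using phi_sig_xv[OF s(1) r(1)] qe s r by simp
    moreover have "l.xv s \<otimes>\<^bsub>l.L\<^esub> l.sig r \<in> carrier l.L" using s r cl by simp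
    ultimately show ?thesis by blast
  next
    assume "\<exists>w\<in>T0. \<exists>c\<in>carrier A. q = \<iota> c \<otimes>\<^bsub>Q\<^esub> inv\<^bsub>Q\<^esub> (\<iota> w)"
    then obtain w c where w: "w \<in> T0" and c: "c \<in> carrier A" and qe: "q = \<iota> c \<otimes>\<^bsub>Q\<^esub> inv\<^bsub>Q\<^esub> (\<iota> w)" by blast
    obtain s where s: "s \<in> Sp" "w = pi s" using T0_pi[OF w] by blast
    obtain r where r: "r \<in> carrier R" "c = pi r" using pi_surj[OF c] by blast
    have "q = phi (l.sig r \<otimes>\<^bsub>l.L\<^esub> l.xv s)" using phi_sig_xv'[OF s(1) r(1)] qe s r by simp
    moreover have "l.sig r \<otimes>\<^bsub>l.L\<^esub> l.xv s \<in> carrier l.L" using s r cl by simp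
    ultimately show ?thesis by blast
  qed
qed

lemma phi_iso: "phi \<in> ring_iso l.L Q"
  unfolding ring_iso_def using phi_hom phi_inj phi_surj by (simp add: bij_betw_def)

lemma nzL: "\<one>\<^bsub>l.L\<^esub> \<noteq> \<zero>\<^bsub>l.L\<^esub>"
proof
  assume "\<one>\<^bsub>l.L\<^esub> = \<zero>\<^bsub>l.L\<^esub>"
  then have "phi \<one>\<^bsub>l.L\<^esub> = phi \<zero>\<^bsub>l.L\<^esub>" by simp
  then have "\<one>\<^bsub>Q\<^esub> = \<zero>\<^bsub>Q\<^esub>"
    using ring_hom_one[OF phi_hom] ring_hom_zero[OF phi_hom l.L_ring qs.Q.ring_axioms] by simp
  then show False using qs.nzQ by simp
qed

lemma Sp_loc: "localizable t R Sp"
proof -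
  have ll: "left_localizable R Sp" if "reg_left_Ore A T0"
    unfolding left_localizable_def using Sp_mult nzL Mlft_all[OF that] unfolding Mlft_def by blast
  have rl: "right_localizable R Sp" if "reg_right_Ore A T0"
    unfolding right_localizable_def using Sp_mult nzL Mrgt_all[OF that] unfolding Mrgt_def by blast
  show ?thesis using T0_Ore ll rl by (cases t) auto
qed

lemma Sp_ass: "ass R Sp = aa"
proof (intro equalityI subsetI)
  fix r assume r: "r \<in> ass R Sp"
  then have rc: "r \<in> carrier R" and z: "l.sig r = \<zero>\<^bsub>l.L\<^esub>" unfolding ass_def by auto
  have "\<iota> (pi r) = \<zero>\<^bsub>Q\<^esub>" using phi_sig[OF rc] z ring_hom_zero[OF phi_hom l.L_ring qs.Q.ring_axioms] by simp
  then show "r \<in> aa" using sig_aa[OF rc] by blast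
next
  fix r assume "r \<in> aa" then show "r \<in> ass R Sp" using aa_sub by blast
qed

lemma T_eq: "T_ass t R aa = Sp"
proof (intro equalityI subsetI)
  fix r assume "r \<in> T_ass t R aa"
  then obtain S where "S \<in> L_ass t R aa" "r \<in> S" unfolding T_ass_def by blast
  then show "r \<in> Sp" using L_ass_sub by blast
next
  fix r assume "r \<in> Sp"
  moreover have "Sp \<in> L_ass t R aa" unfolding L_ass_def using Sp_loc Sp_ass by blast
  ultimately show "r \<in> T_ass t R aa" unfolding T_ass_def by blast
qed

end

theorem theorem2p8:
  fixes R :: "('a, 'm) ring_scheme" and t :: side and \<aa> :: "'a set"
    and Q :: "('q, 'n) ring_scheme" and \<iota> :: "'a set \<Rightarrow> 'q"
  assumes "ring R"
    and "\<aa> \<in> ass_L t R"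
    and "is_Q t (R Quot \<aa>) Q \<iota>"
  shows "T_ass t R \<aa> = {r \<in> carrier R. \<aa> +>\<^bsub>R\<^esub> r \<in> S_Ore t (R Quot \<aa>)} \<and>
         (\<exists>\<phi>. \<phi> \<in> ring_iso (Q_ass t R \<aa>) Q \<and>
           (\<forall>r\<in>carrier R. \<phi> (loc_map R (T_ass t R \<aa>) r) = \<iota> (\<aa> +>\<^bsub>R\<^esub> r))) \<and>
         T_ass t R \<aa> = {r \<in> carrier R. loc_map R (T_ass t R \<aa>) r \<in> Units (Q_ass t R \<aa>)} \<and>
         T_ass t R \<aa> = {r \<in> carrier R. \<iota> (\<aa> +>\<^bsub>R\<^esub> r) \<in> Units Q}"
proof -
  obtain S0 where S0: "localizable t R S0" "ass R S0 = \<aa>"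
    using assms(2) unfolding ass_L_def by blast
  interpret m: mainS R t \<aa> Q \<iota> S0
    by (rule mainS.intro[OF assms(1) S0 assms(3)])
  have T: "T_ass t R \<aa> = m.Sp" by (rule m.T_eq)
  have QA: "Q_ass t R \<aa> = loc R m.Sp" unfolding Q_ass_def T ..
  have p1: "T_ass t R \<aa> = {r \<in> carrier R. \<aa> +>\<^bsub>R\<^esub> r \<in> S_Ore t (R Quot \<aa>)}"
    unfolding T m.Sp_def m.pi_def m.T0_def m.A_def ..
  have p2: "m.phi \<in> ring_iso (Q_ass t R \<aa>) Q \<and>
           (\<forall>r\<in>carrier R. m.phi (loc_map R (T_ass t R \<aa>) r) = \<iota> (\<aa> +>\<^bsub>R\<^esub> r))"
    unfolding QA T using m.phi_iso m.phi_sig by (simp add: m.pi_def)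
  have p3: "T_ass t R \<aa> = {r \<in> carrier R. loc_map R (T_ass t R \<aa>) r \<in> Units (Q_ass t R \<aa>)}"
  proof -
    have "loc_map R m.Sp r \<in> Units (loc R m.Sp) \<longleftrightarrow> r \<in> m.Sp" if r: "r \<in> carrier R" for r
    proof -
      have "loc_map R m.Sp r \<in> Units (loc R m.Sp) \<longleftrightarrow> m.phi (loc_map R m.Sp r) \<in> Units Q"
        by (rule iso_units[OF m.l.L_ring m.qs.Q.ring_axioms m.phi_iso m.l.sh.hom_closed[OF r]])
      also have "\<dots> \<longleftrightarrow> r \<in> m.Sp" using m.phi_sig[OF r] m.Sp_iff r by simp
      finally show ?thesis .
    qed
    note e = this
    show ?thesis unfolding QA T using e m.SpR by auto
  qed
  have p4: "T_ass t R \<aa> = {r \<in> carrier R. \<iota> (\<aa> +>\<^bsub>R\<^esub> r) \<in> Units Q}"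
    unfolding T using m.Sp_iff by (auto simp: m.pi_def)
  show ?thesis using p1 p2 p3 p4 by blast
qed

end
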